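(* Let $G$ be a forest of order $n$. Then at least one of the following holds: (i) the complement $\bar G$ is connected and has minimum degree at least $2$; or (ii) $\phi_T$ and $\phi_{\bar T}$ determine $G$ among all graphs of order $n$, i.e., every graph $G'$ of order $n$ whose oriented edge matrix and whose complement's oriented edge matrix have the same characteristic polynomials as those of $G$ and $\bar G$ respectively is isomorphic to $G$.
   Context: Graphs are finite and simple; $\bar G$ is the complement of $G$. For a graph with $m$ edges, list its $2m$ oriented edges $e_1,\ldots,e_{2m}$ (ordered pairs $(u,v)$ with $uv$ an edge). The oriented edge matrix $T$ is the $2m\times 2m$ matrix whose $(i,j)$-entry is $1$ if $e_i=(u,v)$, $e_j=(v,w)$ with $u\ne w$, and $0$ otherwise; $\phi_T(\lambda)=\det(\lambda I - T)$. $T$ denotes the oriented edge matrix of $G$ and $\bar T$ that of $\bar G$. *)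

theory Defs
  imports "Jordan_Normal_Form.Char_Poly" "HOL-Library.Product_Lexorder"
begin

definition is_graph :: "nat \<Rightarrow> (nat \<Rightarrow> nat \<Rightarrow> bool) \<Rightarrow> bool" where
  "is_graph n E \<longleftrightarrow> (\<forall>u v. E u v \<longrightarrow> u < n \<and> v < n \<and> u \<noteq> v \<and> E v u)"

definition compl_graph :: "nat \<Rightarrow> (nat \<Rightarrow> nat \<Rightarrow> bool) \<Rightarrow> nat \<Rightarrow> nat \<Rightarrow> bool" where
  "compl_graph n E u v \<longleftrightarrow> u < n \<and> v < n \<and> u \<noteq> v \<and> \<not> E u v"

definition is_cycle :: "(nat \<Rightarrow> nat \<Rightarrow> bool) \<Rightarrow> nat list \<Rightarrow> bool" where
  "is_cycle E cs \<longleftrightarrow> length cs \<ge> 3 \<and> distinct cs \<and>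
     (\<forall>i. Suc i < length cs \<longrightarrow> E (cs ! i) (cs ! Suc i)) \<and> E (last cs) (hd cs)"

definition is_forest :: "nat \<Rightarrow> (nat \<Rightarrow> nat \<Rightarrow> bool) \<Rightarrow> bool" where
  "is_forest n E \<longleftrightarrow> is_graph n E \<and> (\<nexists>cs. is_cycle E cs)"

definition graph_connected :: "nat \<Rightarrow> (nat \<Rightarrow> nat \<Rightarrow> bool) \<Rightarrow> bool" where
  "graph_connected n E \<longleftrightarrow> (\<forall>u<n. \<forall>v<n. E\<^sup>*\<^sup>* u v)"

definition degree :: "nat \<Rightarrow> (nat \<Rightarrow> nat \<Rightarrow> bool) \<Rightarrow> nat \<Rightarrow> nat" where
  "degree n E v = card {u. u < n \<and> E v u}"

definition min_degree_ge :: "nat \<Rightarrow> (nat \<Rightarrow> nat \<Rightarrow> bool) \<Rightarrow> nat \<Rightarrow> bool" where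
  "min_degree_ge n E k \<longleftrightarrow> (\<forall>v<n. degree n E v \<ge> k)"

text \<open>Oriented edges in a fixed (lexicographic) order; the characteristic polynomial
  does not depend on the chosen order.\<close>
definition oriented_edges :: "nat \<Rightarrow> (nat \<Rightarrow> nat \<Rightarrow> bool) \<Rightarrow> (nat \<times> nat) list" where
  "oriented_edges n E = sorted_list_of_set {(u, v). u < n \<and> v < n \<and> E u v}"

definition oriented_edge_matrix :: "nat \<Rightarrow> (nat \<Rightarrow> nat \<Rightarrow> bool) \<Rightarrow> int mat" where
  "oriented_edge_matrix n E =
     (let es = oriented_edges n E; k = length es in
      mat k k (\<lambda>(i, j). if snd (es ! i) = fst (es ! j) \<and> fst (es ! i) \<noteq> snd (es ! j)
                        then 1 else 0))"

definition phi_T :: "nat \<Rightarrow> (nat \<Rightarrow> nat \<Rightarrow> bool) \<Rightarrow> int poly" where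
  "phi_T n E = char_poly (oriented_edge_matrix n E)"

definition graph_iso :: "nat \<Rightarrow> (nat \<Rightarrow> nat \<Rightarrow> bool) \<Rightarrow> (nat \<Rightarrow> nat \<Rightarrow> bool) \<Rightarrow> bool" where
  "graph_iso n E E' \<longleftrightarrow> (\<exists>f. bij_betw f {..<n} {..<n} \<and>
      (\<forall>u<n. \<forall>v<n. E u v \<longleftrightarrow> E' (f u) (f v)))"

end

theory Submission
  imports Defs "Jordan_Normal_Form.Schur_Decomposition"
begin


definition tr :: "'a::comm_ring_1 mat \<Rightarrow> 'a" where "tr A = (\<Sum>i<dim_row A. A $$ (i,i))"

lemma tr_comm:
  fixes X Y :: "'a::comm_ring_1 mat"
  assumes X: "X \<in> carrier_mat n n" and Y: "Y \<in> carrier_mat n n"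
  shows "tr (X * Y) = tr (Y * X)"
proof -
  have "tr (X * Y) = (\<Sum>i<n. \<Sum>l<n. X $$ (i,l) * Y $$ (l,i))"
    using X Y by (simp add: tr_def scalar_prod_def atLeast0LessThan)
  also have "\<dots> = (\<Sum>l<n. \<Sum>i<n. Y $$ (l,i) * X $$ (i,l))"
    by (subst sum.swap) (simp add: mult.commute)
  also have "\<dots> = tr (Y * X)"
    using X Y by (simp add: tr_def scalar_prod_def atLeast0LessThan)
  finally show ?thesis .
qed

lemma ut_mult:
  fixes A B :: "'a::comm_ring_1 mat"
  assumes A: "A \<in> carrier_mat n n" and B: "B \<in> carrier_mat n n"
    and uA: "upper_triangular A" and uB: "upper_triangular B"
  shows "upper_triangular (A * B)" "\<And>i. i < n \<Longrightarrow> (A * B) $$ (i,i) = A $$ (i,i) * B $$ (i,i)"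
proof -
  show "upper_triangular (A * B)"
  proof (rule upper_triangularI)
    fix i j assume ji: "j < i" and i: "i < dim_row (A * B)"
    have "(A * B) $$ (i,j) = (\<Sum>l<n. A $$ (i,l) * B $$ (l,j))"
      using A B i ji by (simp add: scalar_prod_def atLeast0LessThan)
    also have "\<dots> = 0"
    proof (rule sum.neutral, intro ballI)
      fix l assume "l \<in> {..<n}"
      show "A $$ (i,l) * B $$ (l,j) = 0"
      proof (cases "l < i")
        case True then show ?thesis using upper_triangularD[OF uA True] A i by simp
      next
        case False then have "j < l" using ji by auto
        then show ?thesis using upper_triangularD[OF uB \<open>j < l\<close>] B \<open>l \<in> {..<n}\<close> by simp
      qed
    qed
    finally show "(A * B) $$ (i,j) = 0" .
  qed
  fix i assume i: "i < n"
  have "(A * B) $$ (i,i) = (\<Sum>l<n. A $$ (i,l) * B $$ (l,i))"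
    using A B i by (simp add: scalar_prod_def atLeast0LessThan)
  also have "\<dots> = (\<Sum>l\<in>{i}. A $$ (i,l) * B $$ (l,i))"
  proof (rule sum.mono_neutral_right, simp)
    show "{i} \<subseteq> {..<n}" using i by auto
    show "\<forall>l\<in>{..<n} - {i}. A $$ (i,l) * B $$ (l,i) = 0"
    proof
    fix l assume l: "l \<in> {..<n} - {i}"
    hence l: "l < n" "l \<noteq> i" by auto
    show "A $$ (i,l) * B $$ (l,i) = 0"
    proof (cases "l < i")
      case True then show ?thesis using upper_triangularD[OF uA True] A i by simp
    next
      case False then have "i < l" using l by auto
      then show ?thesis using upper_triangularD[OF uB \<open>i < l\<close>] B l by simp
    qed
    qed
  qed
  also have "\<dots> = A $$ (i,i) * B $$ (i,i)" by simp
  finally show "(A * B) $$ (i,i) = A $$ (i,i) * B $$ (i,i)" .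
qed

lemma ut_pow:
  fixes A :: "'a::comm_ring_1 mat"
  assumes A: "A \<in> carrier_mat n n" and uA: "upper_triangular A"
  shows "upper_triangular (A ^\<^sub>m k) \<and> (\<forall>i<n. (A ^\<^sub>m k) $$ (i,i) = A $$ (i,i) ^ k)"
proof (induct k)
  case 0 then show ?case using A by auto
next
  case (Suc k)
  have P: "A ^\<^sub>m k \<in> carrier_mat n n" using A by simp
  from Suc ut_mult[OF P A _ uA] show ?case by simp
qed

lemma tr_es:
  fixes A :: "complex mat"
  assumes A: "A \<in> carrier_mat n n" and c: "char_poly A = (\<Prod> a \<leftarrow> es. [:- a, 1:])"
  shows "tr (A ^\<^sub>m k) = (\<Sum>a \<leftarrow> es. a ^ k)"
proof -
  obtain B P Q where s: "schur_decomposition A es = (B,P,Q)" by (cases "schur_decomposition A es") auto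
  from schur_decomposition[OF A c s] have sim: "similar_mat_wit A B P Q"
    and uB: "upper_triangular B" and dB: "diag_mat B = es" by auto
  from similar_mat_witD2[OF A sim] have PQ: "Q * P = 1\<^sub>m n" and B: "B \<in> carrier_mat n n"
    and P: "P \<in> carrier_mat n n" and Q: "Q \<in> carrier_mat n n" by auto
  have Ak: "A ^\<^sub>m k = P * (B ^\<^sub>m k * Q)"
    using similar_mat_wit_pow_id[OF sim, of k] P B Q
    by (simp add: assoc_mult_mat[of _ n n _ n _ n])
  have Bk: "B ^\<^sub>m k \<in> carrier_mat n n" using B by simp
  have "tr (A ^\<^sub>m k) = tr ((B ^\<^sub>m k * Q) * P)"
    unfolding Ak by (rule tr_comm[OF P], use Bk Q in auto)
  also have "(B ^\<^sub>m k * Q) * P = B ^\<^sub>m k"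
    using Bk Q P PQ by (simp add: assoc_mult_mat[of _ n n _ n _ n] right_mult_one_mat)
  also have "tr (B ^\<^sub>m k) = (\<Sum>i<n. B $$ (i,i) ^ k)"
    using ut_pow[OF B uB, of k] Bk B by (simp add: tr_def)
  also have "\<dots> = (\<Sum>a \<leftarrow> es. a ^ k)"
    unfolding dB[symmetric] diag_mat_def using B
    by (simp add: sum_list_map_eq_sum_count atLeast0LessThan[symmetric] sum_list_sum_nth interv_sum_list_conv_sum_set_nat)
  finally show ?thesis .
qed

lemma charpoly_tr:
  fixes A B :: "int mat"
  assumes A: "A \<in> carrier_mat k k" and B: "B \<in> carrier_mat k' k'"
    and c: "char_poly A = char_poly B"
  shows "k = k'" "tr (A ^\<^sub>m p) = tr (B ^\<^sub>m p)"
proof -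
  show kk: "k = k'" using degree_monic_char_poly[OF A] degree_monic_char_poly[OF B] c by simp
  define Ac :: "complex mat" where "Ac = map_mat of_int A"
  define Bc :: "complex mat" where "Bc = map_mat of_int B"
  have Ac: "Ac \<in> carrier_mat k k" and Bc: "Bc \<in> carrier_mat k k" using A B kk by (auto simp: Ac_def Bc_def)
  have cc: "char_poly Ac = char_poly Bc"
    unfolding Ac_def Bc_def of_int_hom.char_poly_hom[OF A] of_int_hom.char_poly_hom[OF B] c ..
  from char_poly_factorized[OF Ac] obtain es where es: "char_poly Ac = (\<Prod> a \<leftarrow> es. [:- a, 1:])" by blast
  have "(of_int (tr (A ^\<^sub>m p)) :: complex) = tr (Ac ^\<^sub>m p)"
    unfolding Ac_def of_int_hom.mat_hom_pow[OF A, symmetric] using A by (simp add: tr_def)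
  also have "\<dots> = (\<Sum>a \<leftarrow> es. a ^ p)" by (rule tr_es[OF Ac es])
  also have "\<dots> = tr (Bc ^\<^sub>m p)" by (rule tr_es[OF Bc, symmetric], use es cc in simp)
  also have "\<dots> = of_int (tr (B ^\<^sub>m p))"
    unfolding Bc_def of_int_hom.mat_hom_pow[OF B, symmetric] using B by (simp add: tr_def)
  finally show "tr (A ^\<^sub>m p) = tr (B ^\<^sub>m p)" by simp
qed



lemma sum_pos_iff_ex:
  fixes g :: "'b \<Rightarrow> int"
  assumes "finite A" "\<And>x. x \<in> A \<Longrightarrow> g x \<ge> 0"
  shows "sum g A > 0 \<longleftrightarrow> (\<exists>x\<in>A. g x > 0)"
proof
  assume "sum g A > 0"
  show "\<exists>x\<in>A. g x > 0"
  proof (rule ccontr)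
    assume "\<not> ?thesis"
    hence "\<And>x. x \<in> A \<Longrightarrow> g x \<le> 0" by auto
    hence "sum g A \<le> 0" by (rule sum_nonpos)
    with \<open>sum g A > 0\<close> show False by simp
  qed
next
  assume "\<exists>x\<in>A. g x > 0"
  then obtain x where x: "x \<in> A" "g x > 0" by blast
  have "g x \<le> sum g A" by (rule member_le_sum[OF x(1)], use assms in auto)
  with x show "sum g A > 0" by simp
qed

lemma pow_path:
  fixes A :: "int mat"
  assumes A: "A \<in> carrier_mat k k" and nn: "\<And>i j. i < k \<Longrightarrow> j < k \<Longrightarrow> A $$ (i,j) \<ge> 0"
  shows "i < k \<Longrightarrow> j < k \<Longrightarrow> (A ^\<^sub>m p) $$ (i,j) \<ge> 0 \<and>
    ((A ^\<^sub>m p) $$ (i,j) > 0 \<longleftrightarrow> (\<exists>f. f 0 = i \<and> f p = j \<and> (\<forall>l\<le>p. f l < k) \<and> (\<forall>l<p. A $$ (f l, f (Suc l)) > 0)))"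
proof (induct p arbitrary: j)
  case 0
  then show ?case
    using A by (auto simp: one_mat_def intro!: exI[of _ "\<lambda>_. i"])
next
  case (Suc p)
  have Pk: "A ^\<^sub>m p \<in> carrier_mat k k" using A by simp
  have eq: "(A ^\<^sub>m Suc p) $$ (i,j) = (\<Sum>l<k. (A ^\<^sub>m p) $$ (i,l) * A $$ (l,j))"
    using Pk A Suc.prems by (simp add: scalar_prod_def atLeast0LessThan)
  have nnt: "\<And>l. l \<in> {..<k} \<Longrightarrow> (A ^\<^sub>m p) $$ (i,l) * A $$ (l,j) \<ge> 0"
    using Suc.hyps[OF Suc.prems(1)] nn Suc.prems by auto
  have pos: "(A ^\<^sub>m Suc p) $$ (i,j) > 0 \<longleftrightarrow> (\<exists>l<k. (A ^\<^sub>m p) $$ (i,l) > 0 \<and> A $$ (l,j) > 0)"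
  proof -
    have "(A ^\<^sub>m Suc p) $$ (i,j) > 0 \<longleftrightarrow> (\<exists>l\<in>{..<k}. (A ^\<^sub>m p) $$ (i,l) * A $$ (l,j) > 0)"
      unfolding eq by (rule sum_pos_iff_ex[OF _ nnt]) auto
    also have "\<dots> \<longleftrightarrow> (\<exists>l<k. (A ^\<^sub>m p) $$ (i,l) > 0 \<and> A $$ (l,j) > 0)"
    proof -
      have "\<And>l. l < k \<Longrightarrow> ((A ^\<^sub>m p) $$ (i,l) * A $$ (l,j) > 0 \<longleftrightarrow> (A ^\<^sub>m p) $$ (i,l) > 0 \<and> A $$ (l,j) > 0)"
        using Suc.hyps[OF Suc.prems(1)] nn Suc.prems
        by (metis zero_less_mult_iff linorder_not_le order.strict_iff_order)
      thus ?thesis by auto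
    qed
    finally show ?thesis .
  qed
  have "0 \<le> (A ^\<^sub>m Suc p) $$ (i,j)" unfolding eq by (rule sum_nonneg, rule nnt)
  moreover have "(\<exists>l<k. (A ^\<^sub>m p) $$ (i,l) > 0 \<and> A $$ (l,j) > 0) \<longleftrightarrow>
     (\<exists>f. f 0 = i \<and> f (Suc p) = j \<and> (\<forall>l\<le>Suc p. f l < k) \<and> (\<forall>l<Suc p. A $$ (f l, f (Suc l)) > 0))"
  proof
    assume "\<exists>l<k. (A ^\<^sub>m p) $$ (i,l) > 0 \<and> A $$ (l,j) > 0"
    then obtain l where l: "l < k" "(A ^\<^sub>m p) $$ (i,l) > 0" "A $$ (l,j) > 0" by blast
    from Suc.hyps[OF Suc.prems(1) l(1)] l obtain f where
      f: "f 0 = i" "f p = l" "\<forall>l\<le>p. f l < k" "\<forall>l<p. A $$ (f l, f (Suc l)) > 0" by blast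
    show "\<exists>f. f 0 = i \<and> f (Suc p) = j \<and> (\<forall>l\<le>Suc p. f l < k) \<and> (\<forall>l<Suc p. A $$ (f l, f (Suc l)) > 0)"
    proof (intro exI[of _ "f(Suc p := j)"] conjI allI impI)
      show "(f(Suc p := j)) 0 = i" using f by simp
      show "(f(Suc p := j)) (Suc p) = j" by simp
      fix m
      show "m \<le> Suc p \<Longrightarrow> (f(Suc p := j)) m < k" using f Suc.prems by (cases "m = Suc p") auto
      show "m < Suc p \<Longrightarrow> A $$ ((f(Suc p := j)) m, (f(Suc p := j)) (Suc m)) > 0"
        using f l by (cases "m = p") auto
    qed
  next
    assume "\<exists>f. f 0 = i \<and> f (Suc p) = j \<and> (\<forall>l\<le>Suc p. f l < k) \<and> (\<forall>l<Suc p. A $$ (f l, f (Suc l)) > 0)"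
    then obtain f where f: "f 0 = i" "f (Suc p) = j" "\<forall>l\<le>Suc p. f l < k" "\<forall>l<Suc p. A $$ (f l, f (Suc l)) > 0" by blast
    have fp: "f p < k" using f by auto
    have "(A ^\<^sub>m p) $$ (i, f p) > 0"
      using Suc.hyps[OF Suc.prems(1) fp] f by (auto intro!: exI[of _ f])
    moreover have "A $$ (f p, j) > 0" using f by auto
    ultimately show "\<exists>l<k. (A ^\<^sub>m p) $$ (i,l) > 0 \<and> A $$ (l,j) > 0" using fp by blast
  qed
  ultimately show ?case using pos by simp
qed

lemma nb_cycle:
  assumes g: "is_graph n E" and adj: "\<And>l. E (x l) (x (Suc l))" and nb: "\<And>l. x (Suc (Suc l)) \<noteq> x l"
  shows "\<exists>cs. is_cycle E cs"
proof -
  have xn: "\<And>l. x l < n" using adj g unfolding is_graph_def by blast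
  have irr: "\<And>u v. E u v \<Longrightarrow> u \<noteq> v" using g unfolding is_graph_def by blast
  have "\<not> inj_on x {..n}"
  proof
    assume "inj_on x {..n}"
    hence "card (x ` {..n}) = card {..n}" by (rule card_image)
    moreover have "x ` {..n} \<subseteq> {..<n}" using xn by auto
    hence "card (x ` {..n}) \<le> n" using card_mono[of "{..<n}"] by fastforce
    ultimately show False by simp
  qed
  then obtain a b where ab: "a \<le> n" "b \<le> n" "a \<noteq> b" "x a = x b" unfolding inj_on_def by auto
  hence ex: "\<exists>j. \<exists>i<j. x i = x j" by (metis linorder_neqE_nat)
  define j where "j = (LEAST j. \<exists>i<j. x i = x j)"
  have jP: "\<exists>i<j. x i = x j" unfolding j_def by (rule LeastI_ex[OF ex])
  have jmin: "\<And>j' i. i < j' \<Longrightarrow> x i = x j' \<Longrightarrow> j \<le> j'" unfolding j_def by (rule Least_le, blast)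
  from jP obtain i where i: "i < j" "x i = x j" by blast
  define cs where "cs = map x [i..<j]"
  have len: "length cs = j - i" by (simp add: cs_def)
  have nth: "\<And>m. m < j - i \<Longrightarrow> cs ! m = x (i + m)" by (simp add: cs_def)
  have dist: "distinct cs"
    unfolding cs_def distinct_map
  proof
    show "distinct [i..<j]" by simp
    show "inj_on x (set [i..<j])"
    proof (rule inj_onI)
      fix a b assume a: "a \<in> set [i..<j]" and b: "b \<in> set [i..<j]" and e: "x a = x b"
      show "a = b"
      proof (rule ccontr)
        assume "a \<noteq> b"
        then consider "a < b" | "b < a" by linarith
        then show False
        proof cases
          case 1 then show False using jmin[OF 1 e] b by simp
        next
          case 2 then show False using jmin[OF 2 e[symmetric]] a by simp
        qed
      qed
    qed
  qed
  have "j - i \<noteq> 1"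
  proof
    assume "j - i = 1" hence "j = Suc i" by simp
    thus False using i irr adj[of i] by auto
  qed
  moreover have "j - i \<noteq> 2"
  proof
    assume "j - i = 2" hence "j = Suc (Suc i)" by simp
    thus False using i nb[of i] by auto
  qed
  moreover have "j - i \<noteq> 0" using i by simp
  ultimately have len3: "length cs \<ge> 3" unfolding len by linarith
  have step: "\<forall>m. Suc m < length cs \<longrightarrow> E (cs ! m) (cs ! Suc m)"
    using nth adj len by auto
  have "last cs = x (j - 1)"
  proof -
    have "cs \<noteq> []" using len3 by auto
    hence "last cs = cs ! (j - i - 1)" using len by (simp add: last_conv_nth)
    also have "\<dots> = x (j - 1)" using nth[of "j - i - 1"] len3 len i by simp
    finally show ?thesis .
  qed
  moreover have "hd cs = x j" using len3 nth[of 0] i by (subst hd_conv_nth, auto)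
  moreover have "E (x (j - 1)) (x j)" using adj[of "j - 1"] i by simp
  ultimately have "E (last cs) (hd cs)" by simp
  with len3 dist step show ?thesis unfolding is_cycle_def by blast
qed

definition OE :: "nat \<Rightarrow> (nat \<Rightarrow> nat \<Rightarrow> bool) \<Rightarrow> (nat \<times> nat) set" where
  "OE n E = {(u, v). u < n \<and> v < n \<and> E u v}"

lemma OE_finite: "finite (OE n E)"
  by (rule finite_subset[of _ "{..<n} \<times> {..<n}"]) (auto simp: OE_def)

lemma oe_set: "set (oriented_edges n E) = OE n E"
  and oe_distinct: "distinct (oriented_edges n E)"
  and oe_len: "length (oriented_edges n E) = card (OE n E)"
  using OE_finite[of n E] unfolding oriented_edges_def OE_def[symmetric]
  by (auto simp: OE_def)

lemma T_carrier: "oriented_edge_matrix n E \<in> carrier_mat (length (oriented_edges n E)) (length (oriented_edges n E))"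
  unfolding oriented_edge_matrix_def Let_def by simp

lemma T_entry: "i < length (oriented_edges n E) \<Longrightarrow> j < length (oriented_edges n E) \<Longrightarrow>
  oriented_edge_matrix n E $$ (i,j) = (if snd (oriented_edges n E ! i) = fst (oriented_edges n E ! j)
     \<and> fst (oriented_edges n E ! i) \<noteq> snd (oriented_edges n E ! j) then 1 else 0)"
  unfolding oriented_edge_matrix_def Let_def by simp

lemma T_nonneg: "i < length (oriented_edges n E) \<Longrightarrow> j < length (oriented_edges n E) \<Longrightarrow>
  oriented_edge_matrix n E $$ (i,j) \<ge> 0"
  by (simp add: T_entry)

lemma T_pow:
  assumes "i < length (oriented_edges n E)" "j < length (oriented_edges n E)"
  shows "(oriented_edge_matrix n E ^\<^sub>m p) $$ (i,j) \<ge> 0 \<and>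
    ((oriented_edge_matrix n E ^\<^sub>m p) $$ (i,j) > 0 \<longleftrightarrow> (\<exists>f. f 0 = i \<and> f p = j \<and>
      (\<forall>l\<le>p. f l < length (oriented_edges n E)) \<and>
      (\<forall>l<p. oriented_edge_matrix n E $$ (f l, f (Suc l)) > 0)))"
proof (rule pow_path[OF T_carrier])
  fix i j assume "i < length (oriented_edges n E)" "j < length (oriented_edges n E)"
  thus "0 \<le> oriented_edge_matrix n E $$ (i, j)" by (rule T_nonneg)
qed (use assms in auto)

lemma tr_nonneg_pow:
  "tr (oriented_edge_matrix n E ^\<^sub>m p) \<ge> 0"
proof -
  let ?k = "length (oriented_edges n E)"
  let ?T = "oriented_edge_matrix n E"
  have "tr (?T ^\<^sub>m p) = (\<Sum>i<?k. (?T ^\<^sub>m p) $$ (i,i))"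
    using T_carrier[of n E] by (simp add: tr_def)
  also have "\<dots> \<ge> 0"
    by (rule sum_nonneg, use T_pow in blast)
  finally show ?thesis .
qed

lemma forest_tr_zero:
  assumes g: "is_graph n E" and nc: "\<nexists>cs. is_cycle E cs" and p: "p > 0"
  shows "tr (oriented_edge_matrix n E ^\<^sub>m p) = 0"
proof (rule ccontr)
  let ?es = "oriented_edges n E"
  let ?k = "length ?es"
  let ?T = "oriented_edge_matrix n E"
  assume "tr (?T ^\<^sub>m p) \<noteq> 0"
  with tr_nonneg_pow[of n E p] have "tr (?T ^\<^sub>m p) > 0" by simp
  moreover have "tr (?T ^\<^sub>m p) = (\<Sum>i<?k. (?T ^\<^sub>m p) $$ (i,i))"
    using T_carrier[of n E] by (simp add: tr_def)
  moreover have "\<And>i. i \<in> {..<?k} \<Longrightarrow> (?T ^\<^sub>m p) $$ (i,i) \<ge> 0"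
    using T_pow by blast
  ultimately have "\<exists>i\<in>{..<?k}. (?T ^\<^sub>m p) $$ (i,i) > 0"
    using sum_pos_iff_ex[of "{..<?k}" "\<lambda>i. (?T ^\<^sub>m p) $$ (i,i)"] by simp
  then obtain i where i: "i < ?k" "(?T ^\<^sub>m p) $$ (i,i) > 0" by auto
  from T_pow[OF i(1) i(1), where p=p] i obtain f where
    f: "f 0 = i" "f p = i" "\<forall>l\<le>p. f l < ?k" "\<forall>l<p. ?T $$ (f l, f (Suc l)) > 0" by blast
  define h where "h l = f (l mod p)" for l
  have hk: "\<And>l. h l < ?k" unfolding h_def using f(3) p by (meson less_imp_le_nat mod_less_divisor)
  have hT: "\<And>l. ?T $$ (h l, h (Suc l)) > 0"
  proof -
    fix l
    show "?T $$ (h l, h (Suc l)) > 0"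
    proof (cases "Suc (l mod p) = p")
      case True
      hence "Suc l mod p = 0" by (simp add: mod_Suc)
      hence "h (Suc l) = f p" unfolding h_def using f by simp
      moreover have "l mod p = p - 1" using True by simp
      hence "h l = f (p - 1)" unfolding h_def by simp
      ultimately show ?thesis using f(4)[rule_format, of "p - 1"] p by simp
    next
      case False
      hence "Suc l mod p = Suc (l mod p)" by (simp add: mod_Suc)
      moreover have "l mod p < p" using p by simp
      ultimately show ?thesis unfolding h_def using f(4) False by auto
    qed
  qed
  define x where "x l = fst (?es ! h l)" for l
  have props: "\<And>l. snd (?es ! h l) = fst (?es ! h (Suc l)) \<and> fst (?es ! h l) \<noteq> snd (?es ! h (Suc l))"
  proof -
    fix l
    have "?T $$ (h l, h (Suc l)) > 0" by (rule hT)
    thus "snd (?es ! h l) = fst (?es ! h (Suc l)) \<and> fst (?es ! h l) \<noteq> snd (?es ! h (Suc l))"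
      using T_entry[OF hk hk, of l "Suc l"] by (auto split: if_splits)
  qed
  have inOE: "\<And>l. ?es ! h l \<in> OE n E" using hk oe_set[of n E] nth_mem by blast
  have "\<exists>cs. is_cycle E cs"
  proof (rule nb_cycle[OF g, of x])
    fix l
    have "?es ! h l = (x l, x (Suc l))" using props[of l] unfolding x_def by (metis prod.collapse)
    thus "E (x l) (x (Suc l))" using inOE[of l] by (simp add: OE_def)
    show "x (Suc (Suc l)) \<noteq> x l" using props[of l] props[of "Suc l"] unfolding x_def by simp
  qed
  with nc show False by blast
qed

lemma cycle_tr_pos:
  assumes g: "is_graph n E" and c: "is_cycle E cs"
  shows "tr (oriented_edge_matrix n E ^\<^sub>m length cs) > 0"
proof -
  let ?es = "oriented_edges n E"
  let ?k = "length ?es"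
  let ?T = "oriented_edge_matrix n E"
  define L where "L = length cs"
  have L3: "L \<ge> 3" and dist: "distinct cs" and st: "\<forall>i. Suc i < L \<longrightarrow> E (cs ! i) (cs ! Suc i)"
    and lh: "E (last cs) (hd cs)" using c unfolding is_cycle_def L_def by auto
  have cadj: "\<And>i. i < L \<Longrightarrow> E (cs ! i) (cs ! (Suc i mod L))"
  proof -
    fix i assume i: "i < L"
    show "E (cs ! i) (cs ! (Suc i mod L))"
    proof (cases "Suc i < L")
      case True
      hence "Suc i mod L = Suc i" by (rule mod_less)
      moreover from st True have "E (cs ! i) (cs ! Suc i)" by blast
      ultimately show ?thesis by simp
    next
      case False
      hence SL: "Suc i = L" using i by linarith
      hence i1: "i = L - 1" by linarith
      have m0: "Suc i mod L = 0" using SL by (metis mod_self)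
      have ne: "cs \<noteq> []" using L3 unfolding L_def by auto
      have "last cs = cs ! (L - 1)" using ne unfolding L_def by (rule last_conv_nth)
      moreover have "hd cs = cs ! 0" using ne by (rule hd_conv_nth)
      ultimately show ?thesis using lh i1 m0 by metis
    qed
  qed
  define x where "x l = cs ! (l mod L)" for l
  have xadj: "\<And>l. E (x l) (x (Suc l))"
  proof -
    fix l
    have "Suc l mod L = Suc (l mod L) mod L" by (simp only: mod_Suc_eq)
    thus "E (x l) (x (Suc l))" unfolding x_def using cadj[of "l mod L"] L3 by simp
  qed
  have xnb: "\<And>l. x (Suc (Suc l)) \<noteq> x l"
  proof -
    fix l
    have m: "Suc (Suc l) mod L \<noteq> l mod L"
    proof
      assume "Suc (Suc l) mod L = l mod L"
      hence e: "(l + 2) mod L = l mod L" by simp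
      have "L dvd (l + 2) - l" using mod_eq_dvd_iff_nat[of l "l+2" L] e by linarith
      hence "L dvd 2" by simp
      hence "L \<le> 2" by (rule dvd_imp_le) simp
      with L3 show False by linarith
    qed
    have pos: "0 < L" using L3 by linarith
    have a1: "Suc (Suc l) mod L < length cs" using pos unfolding L_def by (rule mod_less_divisor)
    have a2: "l mod L < length cs" using pos unfolding L_def by (rule mod_less_divisor)
    note a = a1 a2
    show "x (Suc (Suc l)) \<noteq> x l" unfolding x_def using m nth_eq_iff_index_eq[OF dist a] by blast
  qed
  have eOE: "\<And>l. (x l, x (Suc l)) \<in> OE n E" using xadj g unfolding OE_def is_graph_def by blast
  define f where "f l = (SOME i. i < ?k \<and> ?es ! i = (x l, x (Suc l)))" for l
  have fex: "\<And>l. \<exists>i. i < ?k \<and> ?es ! i = (x l, x (Suc l))"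
    using eOE oe_set by (metis in_set_conv_nth)
  have fk: "\<And>l. f l < ?k" and fe: "\<And>l. ?es ! f l = (x l, x (Suc l))"
    unfolding f_def using someI_ex[OF fex] by blast+
  have fT: "\<And>l. ?T $$ (f l, f (Suc l)) > 0"
  proof -
    fix l
    have "?T $$ (f l, f (Suc l)) = 1"
      by (subst T_entry[OF fk fk]) (simp only: fe fst_conv snd_conv, use xnb[of l] in simp)
    thus "?T $$ (f l, f (Suc l)) > 0" by simp
  qed
  have xL: "x L = x 0" unfolding x_def by simp
  have "Suc L mod L = Suc 0 mod L" by (metis mod_Suc_eq mod_self)
  hence xL1: "x (Suc L) = x (Suc 0)" unfolding x_def by simp
  have fL: "f L = f 0" unfolding f_def xL xL1 ..
  have "\<exists>g. g 0 = f 0 \<and> g L = f 0 \<and> (\<forall>l\<le>L. g l < ?k) \<and> (\<forall>l<L. ?T $$ (g l, g (Suc l)) > 0)"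
  proof (intro exI[of _ f] conjI allI impI)
    show "f 0 = f 0" ..
    show "f L = f 0" by (rule fL)
    fix l
    show "f l < ?k" by (rule fk)
    show "?T $$ (f l, f (Suc l)) > 0" by (rule fT)
  qed
  hence "(?T ^\<^sub>m L) $$ (f 0, f 0) > 0"
    by (rule iffD2[OF conjunct2[OF T_pow[OF fk[of 0] fk[of 0], where p=L]]])
  moreover have "tr (?T ^\<^sub>m L) = (\<Sum>i<?k. (?T ^\<^sub>m L) $$ (i,i))"
    using T_carrier[of n E] by (simp add: tr_def)
  moreover have "(?T ^\<^sub>m L) $$ (f 0, f 0) \<le> (\<Sum>i<?k. (?T ^\<^sub>m L) $$ (i,i))"
  proof (rule member_le_sum)
    show "f 0 \<in> {..<?k}" using fk by simp
    show "finite {..<?k}" by simp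
    fix i assume "i \<in> {..<?k} - {f 0}"
    hence "i < ?k" by simp
    thus "0 \<le> (?T ^\<^sub>m L) $$ (i,i)" using T_pow[of i n E i L] by blast
  qed
  ultimately have "tr (?T ^\<^sub>m L) > 0" by linarith
  thus ?thesis unfolding L_def .
qed



definition ind :: "bool \<Rightarrow> int" where "ind P = (if P then 1 else 0)"

lemma ind_simps[simp]: "ind True = 1" "ind False = 0" by (simp_all add: ind_def)
lemma ind_conj: "ind (P \<and> Q) = ind P * ind Q" by (simp add: ind_def)
lemma ind_nonneg[simp]: "ind P \<ge> 0" by (simp add: ind_def)

lemma ind_sum_card: "finite A \<Longrightarrow> (\<Sum>x\<in>A. ind (P x)) = int (card {x\<in>A. P x})"
proof -
  assume f: "finite A"
  have "(\<Sum>x\<in>A. ind (P x)) = (\<Sum>x\<in>{x\<in>A. P x}. 1)"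
    using f by (simp add: ind_def sum.If_cases Int_def conj_commute)
  thus ?thesis by simp
qed

lemma sum3_card: fixes m :: nat shows "(\<Sum>a<m. \<Sum>b<m. \<Sum>c<m. ind (P a b c)) =
   int (card {(a,b,c). a < m \<and> b < m \<and> c < m \<and> P a b c})"
proof -
  have "(\<Sum>a<m. \<Sum>b<m. \<Sum>c<m. ind (P a b c)) = (\<Sum>(a,b,c)\<in>{..<m} \<times> {..<m} \<times> {..<m}. ind (P a b c))"
    by (simp add: sum.cartesian_product)
  also have "\<dots> = int (card {x \<in> {..<m} \<times> {..<m} \<times> {..<m}. case x of (a,b,c) \<Rightarrow> P a b c})"
    by (subst ind_sum_card[symmetric]) (auto intro!: sum.cong simp: finite_cartesian_product)
  also have "{x \<in> {..<m} \<times> {..<m} \<times> {..<m}. case x of (a,b,c) \<Rightarrow> P a b c} =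
      {(a,b,c). a < m \<and> b < m \<and> c < m \<and> P a b c}" by auto
  finally show ?thesis .
qed

lemma tr_cube:
  fixes A :: "int mat"
  assumes A: "A \<in> carrier_mat k k"
  shows "tr (A ^\<^sub>m 3) = (\<Sum>i<k. \<Sum>j<k. \<Sum>l<k. A $$ (i,j) * A $$ (j,l) * A $$ (l,i))"
proof -
  have e3: "A ^\<^sub>m 3 = A * A * A" using A by (simp add: numeral_3_eq_3)
  have "\<And>i. i < k \<Longrightarrow> (A * A * A) $$ (i,i) = (\<Sum>j<k. \<Sum>l<k. A $$ (i,j) * A $$ (j,l) * A $$ (l,i))"
    using A by (simp add: scalar_prod_def atLeast0LessThan sum_distrib_left mult.assoc)
  thus "tr (A ^\<^sub>m 3) = (\<Sum>i<k. \<Sum>j<k. \<Sum>l<k. A $$ (i,j) * A $$ (j,l) * A $$ (l,i))"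
    unfolding e3 tr_def using A by simp
qed

definition t6 :: "nat \<Rightarrow> (nat \<Rightarrow> nat \<Rightarrow> bool) \<Rightarrow> int" where
  "t6 n E = (\<Sum>a<n. \<Sum>b<n. \<Sum>c<n. ind (E a b \<and> E b c \<and> E c a))"

lemma tr_T3:
  assumes g: "is_graph n E"
  shows "tr (oriented_edge_matrix n E ^\<^sub>m 3) = t6 n E"
proof -
  let ?es = "oriented_edges n E"
  let ?k = "length ?es"
  let ?T = "oriented_edge_matrix n E"
  define C where "C e e' \<longleftrightarrow> snd e = fst e' \<and> fst e \<noteq> snd e'" for e e' :: "nat \<times> nat"
  have Tent: "\<And>i j. i < ?k \<Longrightarrow> j < ?k \<Longrightarrow> ?T $$ (i,j) = ind (C (?es ! i) (?es ! j))"
    unfolding C_def ind_def by (rule T_entry)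
  have "tr (?T ^\<^sub>m 3) = (\<Sum>i<?k. \<Sum>j<?k. \<Sum>l<?k. ind (C (?es!i) (?es!j) \<and> C (?es!j) (?es!l) \<and> C (?es!l) (?es!i)))"
    unfolding tr_cube[OF T_carrier] by (intro sum.cong refl) (simp add: Tent ind_conj)
  also have "\<dots> = int (card {(i,j,l). i < ?k \<and> j < ?k \<and> l < ?k \<and> C (?es!i) (?es!j) \<and> C (?es!j) (?es!l) \<and> C (?es!l) (?es!i)})"
    by (rule sum3_card)
  also have "card {(i,j,l). i < ?k \<and> j < ?k \<and> l < ?k \<and> C (?es!i) (?es!j) \<and> C (?es!j) (?es!l) \<and> C (?es!l) (?es!i)}
    = card {(a,b,c). a < n \<and> b < n \<and> c < n \<and> E a b \<and> E b c \<and> E c a}"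
  proof (rule bij_betw_same_card[of "\<lambda>(i,j,l). (fst (?es!i), fst (?es!j), fst (?es!l))"])
    show "bij_betw (\<lambda>(i,j,l). (fst (?es!i), fst (?es!j), fst (?es!l)))
      {(i,j,l). i < ?k \<and> j < ?k \<and> l < ?k \<and> C (?es!i) (?es!j) \<and> C (?es!j) (?es!l) \<and> C (?es!l) (?es!i)}
      {(a,b,c). a < n \<and> b < n \<and> c < n \<and> E a b \<and> E b c \<and> E c a}"
    proof (rule bij_betwI')
      fix x y assume x: "x \<in> {(i,j,l). i < ?k \<and> j < ?k \<and> l < ?k \<and> C (?es!i) (?es!j) \<and> C (?es!j) (?es!l) \<and> C (?es!l) (?es!i)}"
        and y: "y \<in> {(i,j,l). i < ?k \<and> j < ?k \<and> l < ?k \<and> C (?es!i) (?es!j) \<and> C (?es!j) (?es!l) \<and> C (?es!l) (?es!i)}"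
      obtain i j l where xe: "x = (i,j,l)" by (cases x) auto
      obtain i' j' l' where ye: "y = (i',j',l')" by (cases y) auto
      show "((\<lambda>(i,j,l). (fst (?es!i), fst (?es!j), fst (?es!l))) x = (\<lambda>(i,j,l). (fst (?es!i), fst (?es!j), fst (?es!l))) y) = (x = y)"
      proof
        assume eq: "(\<lambda>(i,j,l). (fst (?es!i), fst (?es!j), fst (?es!l))) x = (\<lambda>(i,j,l). (fst (?es!i), fst (?es!j), fst (?es!l))) y"
        have "?es ! i = ?es ! i'" "?es ! j = ?es ! j'" "?es ! l = ?es ! l'"
          using eq x y unfolding xe ye C_def by (auto simp: prod_eq_iff)
        thus "x = y" using x y unfolding xe ye using nth_eq_iff_index_eq[OF oe_distinct] by auto
      qed simp
    next
      fix x assume x: "x \<in> {(i,j,l). i < ?k \<and> j < ?k \<and> l < ?k \<and> C (?es!i) (?es!j) \<and> C (?es!j) (?es!l) \<and> C (?es!l) (?es!i)}"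
      obtain i j l where xe: "x = (i,j,l)" by (cases x) auto
      have m: "?es ! i \<in> OE n E" "?es ! j \<in> OE n E" "?es ! l \<in> OE n E"
        using x unfolding xe using oe_set nth_mem by (metis (no_types, lifting) case_prodD mem_Collect_eq)+
      show "(\<lambda>(i,j,l). (fst (?es!i), fst (?es!j), fst (?es!l))) x \<in> {(a,b,c). a < n \<and> b < n \<and> c < n \<and> E a b \<and> E b c \<and> E c a}"
        using m x unfolding xe C_def OE_def by (auto simp: prod_eq_iff)
    next
      fix y assume y: "y \<in> {(a,b,c). a < n \<and> b < n \<and> c < n \<and> E a b \<and> E b c \<and> E c a}"
      obtain a b c where ye: "y = (a,b,c)" by (cases y) auto
      have abc: "a < n" "b < n" "c < n" "E a b" "E b c" "E c a" using y ye by auto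
      have ne: "a \<noteq> b" "b \<noteq> c" "c \<noteq> a" using abc g unfolding is_graph_def by blast+
      have "\<And>u v. u < n \<Longrightarrow> v < n \<Longrightarrow> E u v \<Longrightarrow> \<exists>i. i < ?k \<and> ?es ! i = (u,v)"
        using oe_set unfolding OE_def by (metis (no_types, lifting) case_prodI in_set_conv_nth mem_Collect_eq)
      then obtain i j l where ijl: "i < ?k" "?es ! i = (a,b)" "j < ?k" "?es ! j = (b,c)" "l < ?k" "?es ! l = (c,a)"
        using abc by meson
      show "\<exists>x\<in>{(i,j,l). i < ?k \<and> j < ?k \<and> l < ?k \<and> C (?es!i) (?es!j) \<and> C (?es!j) (?es!l) \<and> C (?es!l) (?es!i)}.
          y = (\<lambda>(i,j,l). (fst (?es!i), fst (?es!j), fst (?es!l))) x"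
        by (rule bexI[of _ "(i,j,l)"]) (use ijl ne ye in \<open>auto simp: C_def\<close>)
    qed
  qed
  also have "int (card {(a,b,c). a < n \<and> b < n \<and> c < n \<and> E a b \<and> E b c \<and> E c a}) = t6 n E"
    unfolding t6_def by (rule sum3_card[symmetric])
  finally show ?thesis .
qed



definition dg :: "nat \<Rightarrow> (nat \<Rightarrow> nat \<Rightarrow> bool) \<Rightarrow> nat \<Rightarrow> int" where
  "dg n E a = (\<Sum>c<n. ind (E a c))"
definition DD :: "nat \<Rightarrow> (nat \<Rightarrow> nat \<Rightarrow> bool) \<Rightarrow> int" where
  "DD n E = (\<Sum>a<n. dg n E a)"
definition QQ :: "nat \<Rightarrow> (nat \<Rightarrow> nat \<Rightarrow> bool) \<Rightarrow> int" where
  "QQ n E = (\<Sum>b<n. dg n E b * (dg n E b - 1))"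

lemma compl_graph: "is_graph n E \<Longrightarrow> is_graph n (compl_graph n E)"
  unfolding is_graph_def compl_graph_def by auto

lemma DD_card: "int (card (OE n E)) = DD n E"
proof -
  have "DD n E = (\<Sum>(a,b)\<in>{..<n} \<times> {..<n}. ind (E a b))"
    unfolding DD_def dg_def by (simp add: sum.cartesian_product)
  also have "\<dots> = int (card {x\<in>{..<n} \<times> {..<n}. case x of (a,b) \<Rightarrow> E a b})"
    by (subst ind_sum_card[symmetric]) (auto intro!: sum.cong)
  also have "{x\<in>{..<n} \<times> {..<n}. case x of (a,b) \<Rightarrow> E a b} = OE n E" unfolding OE_def by auto
  finally show ?thesis by simp
qed

lemma rot1: "(\<Sum>a<n::nat. \<Sum>b<n. \<Sum>c<n. g a b c) = (\<Sum>a<n. \<Sum>b<n. \<Sum>c<n. (g c a b :: int))"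
proof -
  have "(\<Sum>a<n. \<Sum>b<n. \<Sum>c<n. g c a b) = (\<Sum>a<n. \<Sum>c<n. \<Sum>b<n. g c a b)"
    by (rule sum.cong[OF refl], rule sum.swap)
  also have "\<dots> = (\<Sum>c<n. \<Sum>a<n. \<Sum>b<n. g c a b)" by (rule sum.swap)
  finally show ?thesis by simp
qed

lemma rot2: "(\<Sum>a<n::nat. \<Sum>b<n. \<Sum>c<n. g a b c) = (\<Sum>a<n. \<Sum>b<n. \<Sum>c<n. (g b c a :: int))"
  using rot1[where g="\<lambda>a b c. g b c a"] by simp

lemma card_minus2: "a < n \<Longrightarrow> b < n \<Longrightarrow> a \<noteq> b \<Longrightarrow> (\<Sum>c<n. ind (b \<noteq> c) * ind (c \<noteq> a)) = int n - 2"
proof -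
  assume ab: "a < n" "b < n" "a \<noteq> b"
  have "(\<Sum>c<n. ind (b \<noteq> c) * ind (c \<noteq> a)) = (\<Sum>c<n. ind (c \<noteq> a \<and> c \<noteq> b))"
    by (intro sum.cong refl) (auto simp: ind_def)
  also have "\<dots> = int (card {c \<in> {..<n}. c \<noteq> a \<and> c \<noteq> b})" by (rule ind_sum_card) simp
  also have "{c \<in> {..<n}. c \<noteq> a \<and> c \<noteq> b} = {..<n} - {a,b}" by auto
  also have "card ({..<n} - {a,b}) = n - 2" using ab by (subst card_Diff_subset) auto
  finally show ?thesis using ab by simp
qed

lemma t6_compl:
  assumes g: "is_graph n F"
  shows "t6 n (compl_graph n F) = int n * (int n - 1) * (int n - 2) - 3 * (int n - 2) * DD n F + 3 * QQ n F - t6 n F"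
proof -
  define X where "X a b = ind (a \<noteq> b)" for a b :: nat
  define Y where "Y a b = ind (F a b)" for a b
  have irr: "\<And>a b. F a b \<Longrightarrow> a \<noteq> b" and sym: "\<And>a b. F a b \<Longrightarrow> F b a"
    and bnd: "\<And>a b. F a b \<Longrightarrow> a < n \<and> b < n" using g unfolding is_graph_def by blast+
  have cXY: "\<And>a b. a < n \<Longrightarrow> b < n \<Longrightarrow> ind (compl_graph n F a b) = X a b - Y a b"
    unfolding X_def Y_def compl_graph_def ind_def using irr by auto
  have Ysym: "\<And>a b. Y a b = Y b a"
  proof -
    fix a b have "F a b = F b a" using sym by blast
    thus "Y a b = Y b a" unfolding Y_def by simp
  qed
  have dgY: "\<And>b. dg n F b = (\<Sum>a<n. Y a b)" unfolding dg_def Y_def using Ysym Y_def by simp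
  have "t6 n (compl_graph n F) = (\<Sum>a<n. \<Sum>b<n. \<Sum>c<n. (X a b - Y a b) * (X b c - Y b c) * (X c a - Y c a))"
    unfolding t6_def by (intro sum.cong refl) (simp add: ind_conj cXY)
  also have "\<dots> = (\<Sum>a<n. \<Sum>b<n. \<Sum>c<n. X a b * X b c * X c a)
      - (\<Sum>a<n. \<Sum>b<n. \<Sum>c<n. Y a b * X b c * X c a)
      - (\<Sum>a<n. \<Sum>b<n. \<Sum>c<n. X a b * Y b c * X c a)
      - (\<Sum>a<n. \<Sum>b<n. \<Sum>c<n. X a b * X b c * Y c a)
      + (\<Sum>a<n. \<Sum>b<n. \<Sum>c<n. Y a b * Y b c * X c a)
      + (\<Sum>a<n. \<Sum>b<n. \<Sum>c<n. X a b * Y b c * Y c a)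
      + (\<Sum>a<n. \<Sum>b<n. \<Sum>c<n. Y a b * X b c * Y c a)
      - (\<Sum>a<n. \<Sum>b<n. \<Sum>c<n. Y a b * Y b c * Y c a)"
    by (simp add: sum.distrib sum_subtractf algebra_simps)
  also have "(\<Sum>a<n. \<Sum>b<n. \<Sum>c<n. Y a b * Y b c * Y c a) = t6 n F"
    unfolding t6_def Y_def by (simp add: ind_conj mult.assoc)
  also have "(\<Sum>a<n. \<Sum>b<n. \<Sum>c<n. X a b * Y b c * X c a) = (\<Sum>a<n. \<Sum>b<n. \<Sum>c<n. Y a b * X b c * X c a)"
    by (subst rot1) (simp add: mult_ac)
  also have "(\<Sum>a<n. \<Sum>b<n. \<Sum>c<n. X a b * X b c * Y c a) = (\<Sum>a<n. \<Sum>b<n. \<Sum>c<n. Y a b * X b c * X c a)"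
    by (subst rot2) (simp add: mult_ac)
  also have "(\<Sum>a<n. \<Sum>b<n. \<Sum>c<n. X a b * Y b c * Y c a) = (\<Sum>a<n. \<Sum>b<n. \<Sum>c<n. Y a b * Y b c * X c a)"
    by (subst rot1) (simp add: mult_ac)
  also have "(\<Sum>a<n. \<Sum>b<n. \<Sum>c<n. Y a b * X b c * Y c a) = (\<Sum>a<n. \<Sum>b<n. \<Sum>c<n. Y a b * Y b c * X c a)"
    by (subst rot2) (simp add: mult_ac)
  also have "(\<Sum>a<n. \<Sum>b<n. \<Sum>c<n. X a b * X b c * X c a) = int n * (int n - 1) * (int n - 2)"
  proof -
    have "\<And>a. a < n \<Longrightarrow> (\<Sum>b<n. \<Sum>c<n. X a b * X b c * X c a) = (int n - 1) * (int n - 2)"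
    proof -
      fix a assume a: "a < n"
      have "(\<Sum>b<n. \<Sum>c<n. X a b * X b c * X c a) = (\<Sum>b<n. X a b * (int n - 2))"
      proof (intro sum.cong refl)
        fix b assume b: "b \<in> {..<n}"
        show "(\<Sum>c<n. X a b * X b c * X c a) = X a b * (int n - 2)"
        proof (cases "a = b")
          case True then show ?thesis by (simp add: X_def)
        next
          case False
          have "(\<Sum>c<n. X a b * X b c * X c a) = X a b * (\<Sum>c<n. X b c * X c a)"
            by (simp add: sum_distrib_left mult.assoc)
          also have "(\<Sum>c<n. X b c * X c a) = int n - 2" unfolding X_def
            using card_minus2[of a n b] a b False by simp
          finally show ?thesis .
        qed
      qed
      also have "\<dots> = (int n - 2) * (\<Sum>b<n. X a b)" by (simp add: sum_distrib_right mult.commute)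
      also have "(\<Sum>b<n. X a b) = int (card {b\<in>{..<n}. a \<noteq> b})" unfolding X_def by (rule ind_sum_card) simp
      also have "{b\<in>{..<n}. a \<noteq> b} = {..<n} - {a}" by auto
      also have "card ({..<n} - {a}) = n - 1" using a by simp
      finally show "(\<Sum>b<n. \<Sum>c<n. X a b * X b c * X c a) = (int n - 1) * (int n - 2)"
        using a by (simp add: of_nat_diff)
    qed
    hence "(\<Sum>a<n. \<Sum>b<n. \<Sum>c<n. X a b * X b c * X c a) = (\<Sum>a<n. (int n - 1) * (int n - 2))"
      by (intro sum.cong) auto
    thus ?thesis by simp
  qed
  also have "(\<Sum>a<n. \<Sum>b<n. \<Sum>c<n. Y a b * X b c * X c a) = (int n - 2) * DD n F"
  proof -
    have "(\<Sum>a<n. \<Sum>b<n. \<Sum>c<n. Y a b * X b c * X c a) = (\<Sum>a<n. \<Sum>b<n. Y a b * (int n - 2))"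
    proof (intro sum.cong refl)
      fix a b assume a: "a \<in> {..<n}" and b: "b \<in> {..<n}"
      show "(\<Sum>c<n. Y a b * X b c * X c a) = Y a b * (int n - 2)"
      proof (cases "F a b")
        case False then show ?thesis by (simp add: Y_def)
      next
        case True
        have "(\<Sum>c<n. Y a b * X b c * X c a) = Y a b * (\<Sum>c<n. X b c * X c a)"
          by (simp add: sum_distrib_left mult.assoc)
        also have "(\<Sum>c<n. X b c * X c a) = int n - 2" unfolding X_def
          using card_minus2[of a n b] a b irr[OF True] by simp
        finally show ?thesis .
      qed
    qed
    also have "\<dots> = (int n - 2) * (\<Sum>a<n. \<Sum>b<n. Y a b)"
      by (simp add: sum_distrib_left sum_distrib_right mult.commute)
    also have "(\<Sum>a<n. \<Sum>b<n. Y a b) = DD n F" unfolding DD_def dg_def Y_def ..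
    finally show ?thesis .
  qed
  also have "(\<Sum>a<n. \<Sum>b<n. \<Sum>c<n. Y a b * Y b c * X c a) = QQ n F"
  proof -
    have "(\<Sum>a<n. \<Sum>b<n. \<Sum>c<n. Y a b * Y b c * X c a) = (\<Sum>b<n. \<Sum>a<n. \<Sum>c<n. Y a b * Y b c * X c a)"
      by (rule sum.swap)
    also have "\<dots> = (\<Sum>b<n. \<Sum>a<n. Y a b * (dg n F b - 1))"
    proof (intro sum.cong refl)
      fix a b assume a: "a \<in> {..<n}" and b: "b \<in> {..<n}"
      show "(\<Sum>c<n. Y a b * Y b c * X c a) = Y a b * (dg n F b - 1)"
      proof (cases "F a b")
        case False then show ?thesis by (simp add: Y_def)
      next
        case True
        have "(\<Sum>c<n. Y a b * Y b c * X c a) = Y a b * (\<Sum>c<n. Y b c * X c a)"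
          by (simp add: sum_distrib_left mult.assoc)
        also have "(\<Sum>c<n. Y b c * X c a) = (\<Sum>c<n. Y b c) - (\<Sum>c<n. Y b c * ind (c = a))"
          by (simp only: sum_subtractf[symmetric], intro sum.cong refl) (simp add: X_def ind_def)
        also have "(\<Sum>c<n. Y b c * ind (c = a)) = Y b a"
        proof -
          have "(\<Sum>c<n. Y b c * ind (c = a)) = (\<Sum>c<n. if c = a then Y b a else 0)"
            by (intro sum.cong refl) (simp add: ind_def)
          thus ?thesis using a by simp
        qed
        also have "Y b a = 1" using sym[OF True] by (simp add: Y_def)
        also have "(\<Sum>c<n. Y b c) = dg n F b" unfolding dg_def Y_def ..
        finally show ?thesis .
      qed
    qed
    also have "\<dots> = (\<Sum>b<n. (dg n F b - 1) * (\<Sum>a<n. Y a b))"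
      by (simp add: sum_distrib_left mult.commute)
    also have "\<dots> = QQ n F" unfolding QQ_def by (simp add: dgY[symmetric] mult.commute)
    finally show ?thesis .
  qed
  finally show ?thesis by (simp add: algebra_simps)
qed

lemma inv_main:
  assumes F: "is_forest n G" and g': "is_graph n G'"
    and p1: "phi_T n G' = phi_T n G"
    and p2: "phi_T n (compl_graph n G') = phi_T n (compl_graph n G)"
  shows "(\<nexists>cs. is_cycle G' cs) \<and> DD n G' = DD n G \<and> QQ n G' = QQ n G \<and> t6 n G' = 0 \<and> t6 n G = 0"
proof -
  have g: "is_graph n G" and nc: "\<nexists>cs. is_cycle G cs" using F unfolding is_forest_def by auto
  note c1 = charpoly_tr[OF T_carrier T_carrier p1[unfolded phi_T_def]]
  note c2 = charpoly_tr[OF T_carrier T_carrier p2[unfolded phi_T_def]]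
  have z: "\<And>p. p > 0 \<Longrightarrow> tr (oriented_edge_matrix n G ^\<^sub>m p) = 0" by (rule forest_tr_zero[OF g nc])
  have nc': "\<nexists>cs. is_cycle G' cs"
  proof
    assume "\<exists>cs. is_cycle G' cs"
    then obtain cs where cs: "is_cycle G' cs" by blast
    have "length cs > 0" using cs unfolding is_cycle_def by auto
    with cycle_tr_pos[OF g' cs] c1(2)[of "length cs"] z show False by simp
  qed
  have "DD n G' = DD n G"
    using c1(1) oe_len[of n G] oe_len[of n G'] DD_card[of n G] DD_card[of n G'] by simp
  moreover have t0: "t6 n G = 0" using tr_T3[OF g] z[of 3] by simp
  moreover have t0': "t6 n G' = 0" using tr_T3[OF g'] c1(2)[of 3] z[of 3] by simp
  moreover have "QQ n G' = QQ n G"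
  proof -
    have "t6 n (compl_graph n G') = t6 n (compl_graph n G)"
      using tr_T3[OF compl_graph[OF g']] tr_T3[OF compl_graph[OF g]] c2(2)[of 3] by simp
    with t6_compl[OF g] t6_compl[OF g'] t0 t0' \<open>DD n G' = DD n G\<close> show ?thesis by simp
  qed
  ultimately show ?thesis using nc' by blast
qed



definition nbr :: "nat \<Rightarrow> (nat \<Rightarrow> nat \<Rightarrow> bool) \<Rightarrow> nat \<Rightarrow> nat set" where
  "nbr n E a = {c. c < n \<and> E a c}"

lemma nbr_finite[simp]: "finite (nbr n E a)"
  unfolding nbr_def by (rule finite_subset[of _ "{..<n}"]) auto

lemma dg_card: "dg n E a = int (card (nbr n E a))"
  unfolding dg_def nbr_def by (subst ind_sum_card) (auto intro!: arg_cong[where f=card])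

lemma no_tri:
  assumes g: "is_graph n E" and nc: "\<nexists>cs. is_cycle E cs"
  shows "\<not> (E a b \<and> E b c \<and> E c a)"
proof
  assume abc: "E a b \<and> E b c \<and> E c a"
  have "a \<noteq> b" "b \<noteq> c" "c \<noteq> a" using abc g unfolding is_graph_def by blast+
  hence "is_cycle E [a,b,c]" using abc unfolding is_cycle_def by (auto simp: nth_Cons split: nat.splits)
  with nc show False by blast
qed

lemma no_c4:
  assumes g: "is_graph n E" and nc: "\<nexists>cs. is_cycle E cs"
    and e: "E a b" "E b c" "E c d" "E d a" and ne: "a \<noteq> c" "b \<noteq> d"
  shows False
proof -
  have "a \<noteq> b" "b \<noteq> c" "c \<noteq> d" "d \<noteq> a" using e g unfolding is_graph_def by blast+
  hence "is_cycle E [a,b,c,d]" using e ne unfolding is_cycle_def by (auto simp: nth_Cons split: nat.splits)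
  with nc show False by blast
qed

definition star_sh :: "nat \<Rightarrow> (nat \<Rightarrow> nat \<Rightarrow> bool) \<Rightarrow> nat \<Rightarrow> nat set \<Rightarrow> bool" where
  "star_sh n E c L \<longleftrightarrow> c < n \<and> L \<subseteq> {..<n} \<and> c \<notin> L \<and>
     (\<forall>a b. E a b \<longleftrightarrow> (a = c \<and> b \<in> L) \<or> (b = c \<and> a \<in> L))"

definition gam_sh :: "nat \<Rightarrow> (nat \<Rightarrow> nat \<Rightarrow> bool) \<Rightarrow> nat \<Rightarrow> nat \<Rightarrow> nat \<Rightarrow> bool" where
  "gam_sh n E v x w \<longleftrightarrow> v < n \<and> x < n \<and> w < n \<and> v \<noteq> x \<and> v \<noteq> w \<and> x \<noteq> w \<and>
     (\<forall>a b. E a b \<longleftrightarrow> (a = v \<and> b \<in> {..<n} - {v,w}) \<or> (b = v \<and> a \<in> {..<n} - {v,w})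
        \<or> (a = x \<and> b = w) \<or> (a = w \<and> b = x))"

lemma shape:
  assumes g: "is_graph n E" and nc: "\<nexists>cs. is_cycle E cs"
    and v: "v < n" and w: "w < n" and dom: "\<And>u. u < n \<Longrightarrow> u \<noteq> v \<Longrightarrow> u \<noteq> w \<Longrightarrow> E v u"
  shows "star_sh n E v ({..<n} - {v}) \<or> (\<not> E v w \<and> star_sh n E v ({..<n} - {v,w})) \<or>
    (\<exists>x. gam_sh n E v x w)"
proof -
  have irr: "\<And>a b. E a b \<Longrightarrow> a \<noteq> b" and sym: "\<And>a b. E a b \<Longrightarrow> E b a"
    and bnd: "\<And>a b. E a b \<Longrightarrow> a < n \<and> b < n" using g unfolding is_graph_def by blast+
  note tri = no_tri[OF g nc]
  have other: "\<And>a b. E a b \<Longrightarrow> a \<noteq> v \<Longrightarrow> b \<noteq> v \<Longrightarrow> a = w \<or> b = w"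
  proof (rule ccontr)
    fix a b assume e: "E a b" "a \<noteq> v" "b \<noteq> v" and "\<not> (a = w \<or> b = w)"
    hence "E v a" "E v b" using dom bnd[OF e(1)] by auto
    thus False using tri[of v a b] e sym by blast
  qed
  show ?thesis
  proof (cases "w = v \<or> E v w")
    case True
    have "star_sh n E v ({..<n} - {v})"
      unfolding star_sh_def
    proof (intro conjI allI)
      fix a b
      show "E a b = (a = v \<and> b \<in> {..<n} - {v} \<or> b = v \<and> a \<in> {..<n} - {v})"
      proof
        assume e: "E a b"
        show "a = v \<and> b \<in> {..<n} - {v} \<or> b = v \<and> a \<in> {..<n} - {v}"
        proof (rule ccontr)
          assume "\<not> ?thesis"
          hence "a \<noteq> v" "b \<noteq> v" using bnd[OF e] irr[OF e] by auto
          hence "E v a" "E v b" using dom bnd[OF e] True by (metis sym)+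
          thus False using tri[of v a b] e sym by blast
        qed
      next
        assume "a = v \<and> b \<in> {..<n} - {v} \<or> b = v \<and> a \<in> {..<n} - {v}"
        thus "E a b" using dom True sym by (metis Diff_iff insertCI lessThan_iff)
      qed
    qed (use v in auto)
    thus ?thesis by blast
  next
    case False
    hence wv: "w \<noteq> v" and nvw: "\<not> E v w" by auto
    show ?thesis
    proof (cases "\<exists>x. E w x")
      case False
      have "star_sh n E v ({..<n} - {v,w})"
        unfolding star_sh_def
      proof (intro conjI allI)
        fix a b
        show "E a b = (a = v \<and> b \<in> {..<n} - {v,w} \<or> b = v \<and> a \<in> {..<n} - {v,w})"
        proof
          assume e: "E a b"
          have "a \<noteq> w" "b \<noteq> w" using e False sym by blast+
          moreover have "a = v \<or> b = v" using other[OF e] \<open>a \<noteq> w\<close> \<open>b \<noteq> w\<close> by blast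
          ultimately show "a = v \<and> b \<in> {..<n} - {v,w} \<or> b = v \<and> a \<in> {..<n} - {v,w}"
            using bnd[OF e] irr[OF e] by auto
        next
          assume "a = v \<and> b \<in> {..<n} - {v,w} \<or> b = v \<and> a \<in> {..<n} - {v,w}"
          thus "E a b" using dom sym by auto
        qed
      qed (use v in auto)
      thus ?thesis using nvw by blast
    next
      case True
      then obtain x where wx: "E w x" by blast
      have xv: "x \<noteq> v" using wx nvw sym by blast
      have xw: "x \<noteq> w" using irr[OF wx] by simp
      have xn: "x < n" using bnd[OF wx] by simp
      have uniq: "\<And>y. E w y \<Longrightarrow> y = x"
      proof (rule ccontr)
        fix y assume wy: "E w y" and "y \<noteq> x"
        have yv: "y \<noteq> v" using wy nvw sym by blast
        have "E v x" "E v y" using dom xn bnd[OF wy] xv yv xw irr[OF wy] by auto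
        thus False using no_c4[OF g nc, of v x w y] wx wy sym \<open>y \<noteq> x\<close> wv by blast
      qed
      have "gam_sh n E v x w"
        unfolding gam_sh_def
      proof (intro conjI allI)
        fix a b
        show "E a b = (a = v \<and> b \<in> {..<n} - {v,w} \<or> b = v \<and> a \<in> {..<n} - {v,w} \<or> a = x \<and> b = w \<or> a = w \<and> b = x)"
        proof
          assume e: "E a b"
          show "a = v \<and> b \<in> {..<n} - {v,w} \<or> b = v \<and> a \<in> {..<n} - {v,w} \<or> a = x \<and> b = w \<or> a = w \<and> b = x"
          proof (cases "a = v \<or> b = v")
            case True
            then show ?thesis using e nvw sym bnd[OF e] irr[OF e] by auto
          next
            case False
            hence "a = w \<or> b = w" using other[OF e] by blast
            then show ?thesis using uniq e sym by blast
          qed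
        next
          assume "a = v \<and> b \<in> {..<n} - {v,w} \<or> b = v \<and> a \<in> {..<n} - {v,w} \<or> a = x \<and> b = w \<or> a = w \<and> b = x"
          thus "E a b" using dom sym wx by auto
        qed
      qed (use v xn w xv wv xw in auto)
      thus ?thesis by blast
    qed
  qed
qed



lemma fail_i:
  assumes F: "is_forest n G"
    and ni: "\<not> (graph_connected n (compl_graph n G) \<and> min_degree_ge n (compl_graph n G) 2)"
  shows "\<exists>v<n. \<exists>w<n. \<forall>u<n. u \<noteq> v \<and> u \<noteq> w \<longrightarrow> G v u"
proof -
  have g: "is_graph n G" and nc: "\<nexists>cs. is_cycle G cs" using F unfolding is_forest_def by auto
  have irr: "\<And>a b. G a b \<Longrightarrow> a \<noteq> b" and sym: "\<And>a b. G a b \<Longrightarrow> G b a"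
    and bnd: "\<And>a b. G a b \<Longrightarrow> a < n \<and> b < n" using g unfolding is_graph_def by blast+
  show ?thesis
  proof (cases "min_degree_ge n (compl_graph n G) 2")
    case False
    then obtain v where v: "v < n" and d: "degree n (compl_graph n G) v < 2"
      unfolding min_degree_ge_def by auto
    define S where "S = {u. u < n \<and> compl_graph n G v u}"
    have fS: "finite S" unfolding S_def by simp
    have cS: "card S \<le> 1" using d unfolding degree_def S_def by simp
    show ?thesis
    proof (cases "S = {}")
      case True
      have "\<forall>u<n. u \<noteq> v \<and> u \<noteq> v \<longrightarrow> G v u" using True v unfolding S_def compl_graph_def by auto
      thus ?thesis using v by blast
    next
      case False
      then obtain w where wS: "w \<in> S" by blast
      have "\<forall>x\<in>S. \<forall>y\<in>S. x = y" using cS fS card_le_Suc0_iff_eq[OF fS] by simp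
      hence Sw: "S = {w}" using wS by blast
      have wn: "w < n" using wS unfolding S_def by simp
      have "\<forall>u<n. u \<noteq> v \<and> u \<noteq> w \<longrightarrow> G v u"
      proof (intro allI impI)
        fix u assume u: "u < n" "u \<noteq> v \<and> u \<noteq> w"
        hence "u \<notin> S" using Sw by auto
        thus "G v u" using u v unfolding S_def compl_graph_def by auto
      qed
      thus ?thesis using v wn by blast
    qed
  next
    case True
    with ni have "\<not> graph_connected n (compl_graph n G)" by simp
    then obtain u v where u: "u < n" and v: "v < n" and nr: "\<not> (compl_graph n G)\<^sup>*\<^sup>* u v"
      unfolding graph_connected_def by blast
    define A where "A = {x. x < n \<and> (compl_graph n G)\<^sup>*\<^sup>* u x}"
    have uA: "u \<in> A" using u unfolding A_def by simp
    have vA: "v \<notin> A" using nr unfolding A_def by simp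
    have cross: "\<And>x y. x \<in> A \<Longrightarrow> y < n \<Longrightarrow> y \<notin> A \<Longrightarrow> G x y"
    proof (rule ccontr)
      fix x y assume x: "x \<in> A" and y: "y < n" "y \<notin> A" and nG: "\<not> G x y"
      have "x \<noteq> y" using x y by auto
      hence "compl_graph n G x y" using x y nG unfolding compl_graph_def A_def by auto
      moreover have "(compl_graph n G)\<^sup>*\<^sup>* u x" using x unfolding A_def by simp
      ultimately have "(compl_graph n G)\<^sup>*\<^sup>* u y" by (rule rtranclp.rtrancl_into_rtrancl[rotated])
      thus False using y unfolding A_def by simp
    qed
    show ?thesis
    proof (cases "A = {u}")
      case True
      have "\<forall>y<n. y \<noteq> u \<and> y \<noteq> u \<longrightarrow> G u y" using cross uA True by auto
      thus ?thesis using u by blast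
    next
      case False
      then obtain u' where u': "u' \<in> A" "u' \<noteq> u" using uA by blast
      have "\<forall>y<n. y \<noteq> v \<and> y \<noteq> v \<longrightarrow> G v y"
      proof (intro allI impI)
        fix y assume y: "y < n" "y \<noteq> v \<and> y \<noteq> v"
        show "G v y"
        proof (cases "y \<in> A")
          case True thus ?thesis using cross[OF True v vA] sym by blast
        next
          case False
          have e1: "G u v" by (rule cross[OF uA v vA])
          have e2: "G v u'" by (rule sym[OF cross[OF u'(1) v vA]])
          have e3: "G u' y" by (rule cross[OF u'(1) y(1) False])
          have e4: "G y u" by (rule sym[OF cross[OF uA y(1) False]])
          have "u \<noteq> u'" using u'(2) by simp
          moreover have "v \<noteq> y" using y by simp
          ultimately show ?thesis using no_c4[OF g nc e1 e2 e3 e4] by blast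
        qed
      qed
      thus ?thesis using v by blast
    qed
  qed
qed

lemma star_sh_dg:
  assumes s: "star_sh n E c L"
  shows "dg n E c = int (card L)" "\<And>l. l \<in> L \<Longrightarrow> dg n E l = 1"
    "\<And>u. u \<noteq> c \<Longrightarrow> u \<notin> L \<Longrightarrow> dg n E u = 0"
proof -
  have c: "c < n" and L: "L \<subseteq> {..<n}" and cL: "c \<notin> L"
    and e: "\<And>a b. E a b \<longleftrightarrow> (a = c \<and> b \<in> L) \<or> (b = c \<and> a \<in> L)" using s unfolding star_sh_def by auto
  have "nbr n E c = L" unfolding nbr_def using e L cL by auto
  thus "dg n E c = int (card L)" by (simp add: dg_card)
  fix l assume "l \<in> L"
  hence "nbr n E l = {c}" unfolding nbr_def using e c cL by auto
  thus "dg n E l = 1" by (simp add: dg_card)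
next
  fix u assume "u \<noteq> c" "u \<notin> L"
  have c: "c < n" and L: "L \<subseteq> {..<n}" and cL: "c \<notin> L"
    and e: "\<And>a b. E a b \<longleftrightarrow> (a = c \<and> b \<in> L) \<or> (b = c \<and> a \<in> L)" using s unfolding star_sh_def by auto
  have "nbr n E u = {}" unfolding nbr_def using e \<open>u \<noteq> c\<close> \<open>u \<notin> L\<close> by auto
  thus "dg n E u = 0" by (simp add: dg_card)
qed

lemma sum_support:
  fixes h :: "nat \<Rightarrow> int"
  assumes "S \<subseteq> {..<n}" "\<And>u. u < n \<Longrightarrow> u \<notin> S \<Longrightarrow> h u = 0"
  shows "(\<Sum>u<n. h u) = (\<Sum>u\<in>S. h u)"
  by (rule sum.mono_neutral_right) (use assms in auto)

lemma star_sh_inv: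
  assumes s: "star_sh n E c L"
  shows "DD n E = 2 * int (card L)" "QQ n E = int (card L) * (int (card L) - 1)"
proof -
  have c: "c < n" and L: "L \<subseteq> {..<n}" and cL: "c \<notin> L" using s unfolding star_sh_def by auto
  have fL: "finite L" using L finite_subset by blast
  note d = star_sh_dg[OF s]
  have "DD n E = (\<Sum>u\<in>insert c L. dg n E u)"
    unfolding DD_def by (rule sum_support) (use c L d in auto)
  also have "\<dots> = dg n E c + (\<Sum>u\<in>L. dg n E u)" using cL fL by simp
  also have "(\<Sum>u\<in>L. dg n E u) = (\<Sum>u\<in>L. 1)" using d by simp
  finally show "DD n E = 2 * int (card L)" using d by simp
  have "QQ n E = (\<Sum>u\<in>{c}. dg n E u * (dg n E u - 1))"
    unfolding QQ_def by (rule sum_support) (use c L d in \<open>auto simp: \<close>)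
  thus "QQ n E = int (card L) * (int (card L) - 1)" using d by simp
qed

lemma gam_sh_inv:
  assumes s: "gam_sh n E v x w"
  shows "DD n E = 2 * (int n - 1)" "QQ n E = (int n - 2) * (int n - 3) + 2"
proof -
  define R where "R = {..<n} - {v,w}"
  have v: "v < n" and x: "x < n" and w: "w < n" and ne: "v \<noteq> x" "v \<noteq> w" "x \<noteq> w"
    and e: "\<And>a b. E a b \<longleftrightarrow> (a = v \<and> b \<in> R) \<or> (b = v \<and> a \<in> R) \<or> (a = x \<and> b = w) \<or> (a = w \<and> b = x)"
    using s unfolding gam_sh_def R_def by auto
  have xR: "x \<in> R" using x ne unfolding R_def by auto
  have fR: "finite R" and cR: "card R = n - 2" using v w ne unfolding R_def by (auto simp: card_Diff_subset)
  have n3: "n \<ge> 3"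
  proof -
    have "{v,x,w} \<subseteq> {..<n}" using v x w by auto
    hence "card {v,x,w} \<le> n" using card_mono[of "{..<n}" "{v,x,w}"] by simp
    thus ?thesis using ne by simp
  qed
  have dv: "dg n E v = int n - 2"
  proof -
    have "nbr n E v = R" unfolding nbr_def using e ne unfolding R_def by auto
    thus ?thesis using cR n3 by (simp add: dg_card of_nat_diff)
  qed
  have dx: "dg n E x = 2"
  proof -
    have "nbr n E x = {v,w}" unfolding nbr_def using e ne xR v w unfolding R_def by auto
    thus ?thesis using ne by (simp add: dg_card)
  qed
  have dw: "dg n E w = 1"
  proof -
    have "nbr n E w = {x}" unfolding nbr_def using e ne x unfolding R_def by auto
    thus ?thesis by (simp add: dg_card)
  qed
  have du: "\<And>u. u \<in> R \<Longrightarrow> u \<noteq> x \<Longrightarrow> dg n E u = 1"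
  proof -
    fix u assume u: "u \<in> R" "u \<noteq> x"
    have "nbr n E u = {v}" unfolding nbr_def using e u v unfolding R_def by auto
    thus "dg n E u = 1" by (simp add: dg_card)
  qed
  have split: "{..<n} = insert v (insert w R)" using v w unfolding R_def by auto
  have vR: "v \<notin> R" "w \<notin> R" unfolding R_def by auto
  have "DD n E = dg n E v + dg n E w + (\<Sum>u\<in>R. dg n E u)"
    unfolding DD_def split using fR vR ne by simp
  also have "(\<Sum>u\<in>R. dg n E u) = dg n E x + (\<Sum>u\<in>R - {x}. dg n E u)"
    using fR xR by (simp add: sum.remove)
  also have "(\<Sum>u\<in>R - {x}. dg n E u) = (\<Sum>u\<in>R - {x}. 1)" using du by (intro sum.cong) auto
  also have "\<dots> = int (n - 3)" using cR xR fR by simp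
  finally show "DD n E = 2 * (int n - 1)" using dv dx dw n3 by (simp add: of_nat_diff)
  have "QQ n E = (\<Sum>u\<in>{v,x}. dg n E u * (dg n E u - 1))"
    unfolding QQ_def
  proof (rule sum_support)
    show "{v,x} \<subseteq> {..<n}" using v x by simp
    fix u assume u: "u < n" "u \<notin> {v,x}"
    show "dg n E u * (dg n E u - 1) = 0"
    proof (cases "u = w")
      case True thus ?thesis using dw by simp
    next
      case False
      hence "u \<in> R" "u \<noteq> x" using u unfolding R_def by auto
      thus ?thesis using du by simp
    qed
  qed
  thus "QQ n E = (int n - 2) * (int n - 3) + 2" using dv dx ne by (simp add: algebra_simps)
qed



definition wdg :: "nat \<Rightarrow> (nat \<Rightarrow> nat \<Rightarrow> bool) \<Rightarrow> nat \<Rightarrow> nat \<Rightarrow> int" where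
  "wdg n E a b = (\<Sum>c<n. \<Sum>d<n. ind (E c d \<and> c \<noteq> a \<and> c \<noteq> b \<and> d \<noteq> a \<and> d \<noteq> b))"
definition WW :: "nat \<Rightarrow> (nat \<Rightarrow> nat \<Rightarrow> bool) \<Rightarrow> int" where
  "WW n E = (\<Sum>a<n. \<Sum>b<n. ind (E a b) * wdg n E a b)"

lemma wdg_nonneg: "wdg n E a b \<ge> 0"
  unfolding wdg_def by (intro sum_nonneg) simp

lemma sum_delta_ind: "a < (n::nat) \<Longrightarrow> (\<Sum>c<n. ind (c = a) * f c) = (f a :: int)"
proof -
  assume a: "a < n"
  have "(\<Sum>c<n. ind (c = a) * f c) = (\<Sum>c<n. if c = a then f a else 0)"
    by (intro sum.cong refl) (simp add: ind_def)
  thus ?thesis using a by simp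
qed

lemma sum_delta_ind': "a < (n::nat) \<Longrightarrow> (\<Sum>c<n. f c * ind (c = a)) = (f a :: int)"
  using sum_delta_ind[of a n f] by (simp add: mult.commute)

lemma wdg_formula:
  assumes g: "is_graph n E" and ab: "E a b"
  shows "wdg n E a b = DD n E - 2 * dg n E a - 2 * dg n E b + 2"
proof -
  have irr: "\<And>a b. E a b \<Longrightarrow> a \<noteq> b" and sym: "\<And>a b. E a b \<Longrightarrow> E b a"
    and bnd: "\<And>a b. E a b \<Longrightarrow> a < n \<and> b < n" using g unfolding is_graph_def by blast+
  have an: "a < n" and bn: "b < n" and anb: "a \<noteq> b" using bnd[OF ab] irr[OF ab] by auto
  have pt: "\<And>c d. ind (E c d) = ind (E c d \<and> c \<noteq> a \<and> c \<noteq> b \<and> d \<noteq> a \<and> d \<noteq> b)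
      + (ind (c = a) * ind (E c d) + ind (c = b) * ind (E c d) + ind (E c d) * ind (d = a) + ind (E c d) * ind (d = b)
         - ind (c = a) * ind (d = b) * ind (E c d) - ind (c = b) * ind (d = a) * ind (E c d))"
  proof -
    fix c d
    show "?thesis c d"
    proof (cases "E c d")
      case False thus ?thesis by simp
    next
      case True
      hence "c \<noteq> d" by (rule irr)
      thus ?thesis using True anb by (auto simp: ind_def)
    qed
  qed
  have s1: "(\<Sum>c<n. \<Sum>d<n. ind (c = a) * ind (E c d)) = dg n E a"
    by (simp add: sum_distrib_left[symmetric] sum_delta_ind an dg_def)
  have s2: "(\<Sum>c<n. \<Sum>d<n. ind (c = b) * ind (E c d)) = dg n E b"
    by (simp add: sum_distrib_left[symmetric] sum_delta_ind bn dg_def)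
  have symind: "\<And>c d. ind (E c d) = ind (E d c)"
  proof -
    fix c d have "E c d = E d c" using sym by blast
    thus "ind (E c d) = ind (E d c)" by simp
  qed
  have s3: "(\<Sum>c<n. \<Sum>d<n. ind (E c d) * ind (d = a)) = dg n E a"
    by (simp add: sum_delta_ind' an dg_def symind)
  have s4: "(\<Sum>c<n. \<Sum>d<n. ind (E c d) * ind (d = b)) = dg n E b"
    by (simp add: sum_delta_ind' bn dg_def symind)
  have s5: "(\<Sum>c<n. \<Sum>d<n. ind (c = a) * ind (d = b) * ind (E c d)) = 1"
  proof -
    have "(\<Sum>c<n. \<Sum>d<n. ind (c = a) * ind (d = b) * ind (E c d)) = (\<Sum>c<n. ind (c = a) * (\<Sum>d<n. ind (E c d) * ind (d = b)))"
      by (simp add: sum_distrib_left mult_ac)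
    also have "\<dots> = (\<Sum>c<n. ind (c = a) * ind (E c b))" by (simp add: sum_delta_ind' bn)
    also have "\<dots> = ind (E a b)" by (rule sum_delta_ind[OF an])
    finally show ?thesis using ab by simp
  qed
  have s6: "(\<Sum>c<n. \<Sum>d<n. ind (c = b) * ind (d = a) * ind (E c d)) = 1"
  proof -
    have "(\<Sum>c<n. \<Sum>d<n. ind (c = b) * ind (d = a) * ind (E c d)) = (\<Sum>c<n. ind (c = b) * (\<Sum>d<n. ind (E c d) * ind (d = a)))"
      by (simp add: sum_distrib_left mult_ac)
    also have "\<dots> = (\<Sum>c<n. ind (c = b) * ind (E c a))" by (simp add: sum_delta_ind' an)
    also have "\<dots> = ind (E b a)" by (rule sum_delta_ind[OF bn])
    finally show ?thesis using sym[OF ab] by simp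
  qed
  have "DD n E = (\<Sum>c<n. \<Sum>d<n. ind (E c d))" unfolding DD_def dg_def ..
  also have "\<dots> = wdg n E a b + ((\<Sum>c<n. \<Sum>d<n. ind (c = a) * ind (E c d)) + (\<Sum>c<n. \<Sum>d<n. ind (c = b) * ind (E c d))
     + (\<Sum>c<n. \<Sum>d<n. ind (E c d) * ind (d = a)) + (\<Sum>c<n. \<Sum>d<n. ind (E c d) * ind (d = b))
     - (\<Sum>c<n. \<Sum>d<n. ind (c = a) * ind (d = b) * ind (E c d)) - (\<Sum>c<n. \<Sum>d<n. ind (c = b) * ind (d = a) * ind (E c d)))"
    unfolding wdg_def by (subst pt) (simp only: sum.distrib sum_subtractf)
  also have "\<dots> = wdg n E a b + (dg n E a + dg n E b + dg n E a + dg n E b - 1 - 1)"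
    unfolding s1 s2 s3 s4 s5 s6 ..
  finally show ?thesis by simp
qed

lemma WW_formula:
  assumes g: "is_graph n E"
  shows "WW n E = DD n E * DD n E - 2 * DD n E - 4 * QQ n E"
proof -
  have sym: "\<And>a b. E a b \<Longrightarrow> E b a" using g unfolding is_graph_def by blast
  have symind: "\<And>c d. ind (E c d) = ind (E d c)"
  proof -
    fix c d have "E c d = E d c" using sym by blast
    thus "ind (E c d) = ind (E d c)" by simp
  qed
  let ?Y = "\<lambda>a b. ind (E a b)"
  have "WW n E = (\<Sum>a<n. \<Sum>b<n. (DD n E + 2) * ?Y a b - 2 * (dg n E a * ?Y a b) - 2 * (dg n E b * ?Y a b))"
    unfolding WW_def
  proof (intro sum.cong refl)
    fix a b
    show "ind (E a b) * wdg n E a b = (DD n E + 2) * ?Y a b - 2 * (dg n E a * ?Y a b) - 2 * (dg n E b * ?Y a b)"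
      by (cases "E a b") (simp_all add: wdg_formula[OF g] algebra_simps)
  qed
  also have "\<dots> = (DD n E + 2) * (\<Sum>a<n. \<Sum>b<n. ?Y a b) - 2 * (\<Sum>a<n. \<Sum>b<n. dg n E a * ?Y a b)
      - 2 * (\<Sum>a<n. \<Sum>b<n. dg n E b * ?Y a b)"
    by (simp only: sum.distrib sum_subtractf sum_distrib_left)
  also have "(\<Sum>a<n. \<Sum>b<n. ?Y a b) = DD n E" unfolding DD_def dg_def ..
  also have "(\<Sum>a<n. \<Sum>b<n. dg n E a * ?Y a b) = (\<Sum>a<n. dg n E a * dg n E a)"
    unfolding dg_def by (simp only: sum_distrib_left)
  also have "(\<Sum>a<n. \<Sum>b<n. dg n E b * ?Y a b) = (\<Sum>b<n. \<Sum>a<n. dg n E b * ?Y a b)"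
    by (rule sum.swap)
  also have "\<dots> = (\<Sum>b<n. dg n E b * (\<Sum>a<n. ?Y b a))"
    by (simp only: sum_distrib_left symind)
  also have "\<dots> = (\<Sum>a<n. dg n E a * dg n E a)" unfolding dg_def ..
  also have "(\<Sum>a<n. dg n E a * dg n E a) = QQ n E + DD n E"
    unfolding QQ_def DD_def by (simp add: sum.distrib[symmetric] algebra_simps)
  finally show ?thesis by (simp add: algebra_simps)
qed

lemma WW_zero:
  assumes W: "WW n E = 0" and ab: "E a b" and cd: "E c d" and bnd: "a < n" "b < n" "c < n" "d < n"
  shows "c = a \<or> c = b \<or> d = a \<or> d = b"
proof (rule ccontr)
  assume ne: "\<not> ?thesis"
  have nn: "\<And>a b. 0 \<le> ind (E a b) * wdg n E a b" using wdg_nonneg by simp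
  have "(\<Sum>b<n. ind (E a b) * wdg n E a b) = 0"
    using W unfolding WW_def by (subst (asm) sum_nonneg_eq_0_iff) (auto intro: sum_nonneg nn simp: bnd)
  hence "ind (E a b) * wdg n E a b = 0"
    by (subst (asm) sum_nonneg_eq_0_iff) (auto intro: nn simp: bnd)
  hence w0: "wdg n E a b = 0" using ab by simp
  have "(\<Sum>d<n. ind (E c d \<and> c \<noteq> a \<and> c \<noteq> b \<and> d \<noteq> a \<and> d \<noteq> b)) = 0"
    using w0 unfolding wdg_def by (subst (asm) sum_nonneg_eq_0_iff) (auto intro: sum_nonneg simp: bnd)
  hence "ind (E c d \<and> c \<noteq> a \<and> c \<noteq> b \<and> d \<noteq> a \<and> d \<noteq> b) = 0"
    by (subst (asm) sum_nonneg_eq_0_iff) (auto simp: bnd)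
  thus False using cd ne by simp
qed

lemma pairwise_star:
  assumes g: "is_graph n E" and nc: "\<nexists>cs. is_cycle E cs" and n: "n \<ge> 1"
    and pw: "\<And>a b c d. E a b \<Longrightarrow> E c d \<Longrightarrow> c = a \<or> c = b \<or> d = a \<or> d = b"
  shows "\<exists>c L. star_sh n E c L"
proof -
  have irr: "\<And>a b. E a b \<Longrightarrow> a \<noteq> b" and sym: "\<And>a b. E a b \<Longrightarrow> E b a"
    and bnd: "\<And>a b. E a b \<Longrightarrow> a < n \<and> b < n" using g unfolding is_graph_def by blast+
  note tri = no_tri[OF g nc]
  have st: "\<And>c. c < n \<Longrightarrow> (\<forall>p q. E p q \<longrightarrow> p = c \<or> q = c) \<Longrightarrow> star_sh n E c (nbr n E c)"
  proof -
    fix c assume c: "c < n" and all: "\<forall>p q. E p q \<longrightarrow> p = c \<or> q = c"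
    show "star_sh n E c (nbr n E c)"
      unfolding star_sh_def nbr_def using c all irr sym bnd by blast
  qed
  show ?thesis
  proof (cases "\<exists>a b. E a b")
    case False
    hence "star_sh n E 0 {}" unfolding star_sh_def using n by auto
    thus ?thesis by blast
  next
    case True
    then obtain a b where ab: "E a b" by blast
    show ?thesis
    proof (cases "\<forall>p q. E p q \<longrightarrow> p = a \<or> q = a")
      case True thus ?thesis using st bnd[OF ab] by blast
    next
      case False
      then obtain p q where pq: "E p q" "p \<noteq> a" "q \<noteq> a" by blast
      have "p = b \<or> q = b" using pw[OF ab pq(1)] pq by blast
      then obtain x where bx: "E b x" "x \<noteq> a" using pq sym by blast
      show ?thesis
      proof (cases "\<forall>p q. E p q \<longrightarrow> p = b \<or> q = b")
        case True thus ?thesis using st bnd[OF ab] by blast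
      next
        case False
        then obtain r s where rs: "E r s" "r \<noteq> b" "s \<noteq> b" by blast
        have "r = a \<or> s = a" using pw[OF ab rs(1)] rs by blast
        then obtain y where ay: "E a y" "y \<noteq> b" using rs sym by blast
        have "b \<noteq> a" using irr[OF ab] by simp
        hence "x = y" using pw[OF bx(1) ay(1)] bx ay irr[OF ay(1)] by auto
        thus ?thesis using tri[of a b x] ab bx ay sym by blast
      qed
    qed
  qed
qed



lemma star_iso:
  assumes s: "star_sh n E c L" and s': "star_sh n E' c' L'" and cd: "card L = card L'"
  shows "graph_iso n E' E"
proof -
  have c: "c < n" and L: "L \<subseteq> {..<n}" and cL: "c \<notin> L"
    and e: "\<And>a b. E a b \<longleftrightarrow> (a = c \<and> b \<in> L) \<or> (b = c \<and> a \<in> L)" using s unfolding star_sh_def by auto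
  have c': "c' < n" and L': "L' \<subseteq> {..<n}" and cL': "c' \<notin> L'"
    and e': "\<And>a b. E' a b \<longleftrightarrow> (a = c' \<and> b \<in> L') \<or> (b = c' \<and> a \<in> L')" using s' unfolding star_sh_def by auto
  define R where "R = {..<n} - insert c L"
  define R' where "R' = {..<n} - insert c' L'"
  have fL: "finite L" "finite L'" using L L' finite_subset by blast+
  have cR: "card R = n - Suc (card L)" unfolding R_def using c L cL fL by (subst card_Diff_subset) auto
  have cR': "card R' = n - Suc (card L')" unfolding R'_def using c' L' cL' fL by (subst card_Diff_subset) auto
  obtain g1 where g1: "bij_betw g1 L' L" using finite_same_card_bij[OF fL(2) fL(1)] cd by metis
  obtain g2 where g2: "bij_betw g2 R' R"
    using finite_same_card_bij[of R' R] cR cR' cd unfolding R_def R'_def by auto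
  define f where "f u = (if u = c' then c else if u \<in> L' then g1 u else g2 u)" for u
  have b1: "bij_betw f {c'} {c}" unfolding f_def by (simp add: bij_betw_def)
  have b2: "bij_betw f L' L" using g1 cL' by (subst bij_betw_cong[where g=g1]) (auto simp: f_def)
  have b3: "bij_betw f R' R" using g2 unfolding R'_def by (subst bij_betw_cong[where g=g2]) (auto simp: f_def)
  have b12: "bij_betw f ({c'} \<union> L') ({c} \<union> L)"
    by (rule bij_betw_combine[OF b1 b2]) (use cL in auto)
  have "bij_betw f ({c'} \<union> L' \<union> R') ({c} \<union> L \<union> R)"
    by (rule bij_betw_combine[OF b12 b3]) (auto simp: R_def)
  moreover have "{c'} \<union> L' \<union> R' = {..<n}" using c' L' unfolding R'_def by auto
  moreover have "{c} \<union> L \<union> R = {..<n}" using c L unfolding R_def by auto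
  ultimately have bij: "bij_betw f {..<n} {..<n}" by simp
  have fc: "\<And>u. u < n \<Longrightarrow> f u = c \<longleftrightarrow> u = c'"
  proof -
    fix u assume u: "u < n"
    show "f u = c \<longleftrightarrow> u = c'"
    proof (cases "u = c'")
      case False
      show ?thesis
      proof (cases "u \<in> L'")
        case True thus ?thesis using False bij_betwE[OF g1] cL by (auto simp: f_def)
      next
        case False' : False
        hence "u \<in> R'" using u False unfolding R'_def by auto
        thus ?thesis using False False' bij_betwE[OF g2] by (auto simp: f_def R_def)
      qed
    qed (simp add: f_def)
  qed
  have fL': "\<And>u. u < n \<Longrightarrow> f u \<in> L \<longleftrightarrow> u \<in> L'"
  proof -
    fix u assume u: "u < n"
    show "f u \<in> L \<longleftrightarrow> u \<in> L'"
    proof (cases "u = c'")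
      case False
      show ?thesis
      proof (cases "u \<in> L'")
        case True thus ?thesis using False bij_betwE[OF g1] by (auto simp: f_def)
      next
        case False' : False
        hence "u \<in> R'" using u False unfolding R'_def by auto
        thus ?thesis using False False' bij_betwE[OF g2] by (auto simp: f_def R_def)
      qed
    qed (use cL cL' in \<open>simp add: f_def\<close>)
  qed
  show ?thesis
    unfolding graph_iso_def
  proof (intro exI[of _ f] conjI allI impI)
    show "bij_betw f {..<n} {..<n}" by (rule bij)
    fix u v assume u: "u < n" and v: "v < n"
    show "E' u v \<longleftrightarrow> E (f u) (f v)" unfolding e e' using fc[OF u] fc[OF v] fL'[OF u] fL'[OF v] by blast
  qed
qed

lemma gam_iso:
  assumes s: "gam_sh n E v x w" and s': "gam_sh n E' v' x' w'"
  shows "graph_iso n E' E"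
proof -
  have v: "v < n" and x: "x < n" and w: "w < n" and ne: "v \<noteq> x" "v \<noteq> w" "x \<noteq> w"
    and e: "\<And>a b. E a b \<longleftrightarrow> (a = v \<and> b \<in> {..<n} - {v,w}) \<or> (b = v \<and> a \<in> {..<n} - {v,w}) \<or> (a = x \<and> b = w) \<or> (a = w \<and> b = x)"
    using s unfolding gam_sh_def by auto
  have v': "v' < n" and x': "x' < n" and w': "w' < n" and ne': "v' \<noteq> x'" "v' \<noteq> w'" "x' \<noteq> w'"
    and e': "\<And>a b. E' a b \<longleftrightarrow> (a = v' \<and> b \<in> {..<n} - {v',w'}) \<or> (b = v' \<and> a \<in> {..<n} - {v',w'}) \<or> (a = x' \<and> b = w') \<or> (a = w' \<and> b = x')"
    using s' unfolding gam_sh_def by auto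
  define R where "R = {..<n} - {v,x,w}"
  define R' where "R' = {..<n} - {v',x',w'}"
  have cR: "card R = n - 3" unfolding R_def using v x w ne by (subst card_Diff_subset) auto
  have cR': "card R' = n - 3" unfolding R'_def using v' x' w' ne' by (subst card_Diff_subset) auto
  obtain g where g: "bij_betw g R' R"
    using finite_same_card_bij[of R' R] cR cR' unfolding R_def R'_def by auto
  define f where "f u = (if u = v' then v else if u = x' then x else if u = w' then w else g u)" for u
  have b1: "bij_betw f {v',x',w'} {v,x,w}"
    unfolding bij_betw_def inj_on_def f_def using ne ne' by auto
  have b3: "bij_betw f R' R" using g unfolding R'_def by (subst bij_betw_cong[where g=g]) (auto simp: f_def)
  have "bij_betw f ({v',x',w'} \<union> R') ({v,x,w} \<union> R)"
    by (rule bij_betw_combine[OF b1 b3]) (auto simp: R_def)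
  moreover have "{v',x',w'} \<union> R' = {..<n}" using v' x' w' unfolding R'_def by auto
  moreover have "{v,x,w} \<union> R = {..<n}" using v x w unfolding R_def by auto
  ultimately have bij: "bij_betw f {..<n} {..<n}" by simp
  have fR: "\<And>u. u \<in> R' \<Longrightarrow> f u \<in> R" using g bij_betwE unfolding f_def R'_def by auto
  have fv: "\<And>u. u < n \<Longrightarrow> f u = v \<longleftrightarrow> u = v'" and fx: "\<And>u. u < n \<Longrightarrow> f u = x \<longleftrightarrow> u = x'"
    and fw: "\<And>u. u < n \<Longrightarrow> f u = w \<longleftrightarrow> u = w'"
  proof -
    fix u assume u: "u < n"
    consider "u = v'" | "u = x'" | "u = w'" | "u \<in> R'" using u unfolding R'_def by auto
    hence "(f u = v \<longleftrightarrow> u = v') \<and> (f u = x \<longleftrightarrow> u = x') \<and> (f u = w \<longleftrightarrow> u = w')"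
    proof cases
      case 4 thus ?thesis using fR[OF 4] unfolding R_def R'_def by auto
    qed (use ne ne' in \<open>auto simp: f_def\<close>)
    thus "f u = v \<longleftrightarrow> u = v'" "f u = x \<longleftrightarrow> u = x'" "f u = w \<longleftrightarrow> u = w'" by auto
  qed
  have fn: "\<And>u. u < n \<Longrightarrow> f u < n" using bij bij_betwE by blast
  show ?thesis
    unfolding graph_iso_def
  proof (intro exI[of _ f] conjI allI impI)
    show "bij_betw f {..<n} {..<n}" by (rule bij)
    fix a b assume a: "a < n" and b: "b < n"
    show "E' a b \<longleftrightarrow> E (f a) (f b)" unfolding e e'
      using fv[OF a] fv[OF b] fx[OF a] fx[OF b] fw[OF a] fw[OF b] fn[OF a] fn[OF b] a b by auto
  qed
qed



definition Dset :: "nat \<Rightarrow> (nat \<Rightarrow> nat \<Rightarrow> bool) \<Rightarrow> nat \<Rightarrow> nat \<Rightarrow> (nat \<times> nat) set" where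
  "Dset n E a b = {(c,d). c < n \<and> d < n \<and> E c d \<and> c \<noteq> a \<and> c \<noteq> b \<and> d \<noteq> a \<and> d \<noteq> b}"

lemma wdg_card: "wdg n E a b = int (card (Dset n E a b))"
proof -
  have "wdg n E a b = (\<Sum>(c,d)\<in>{..<n} \<times> {..<n}. ind (E c d \<and> c \<noteq> a \<and> c \<noteq> b \<and> d \<noteq> a \<and> d \<noteq> b))"
    unfolding wdg_def by (simp add: sum.cartesian_product)
  also have "\<dots> = int (card {x\<in>{..<n} \<times> {..<n}. case x of (c,d) \<Rightarrow> E c d \<and> c \<noteq> a \<and> c \<noteq> b \<and> d \<noteq> a \<and> d \<noteq> b})"
    by (subst ind_sum_card[symmetric]) (auto intro!: sum.cong)
  also have "{x\<in>{..<n} \<times> {..<n}. case x of (c,d) \<Rightarrow> E c d \<and> c \<noteq> a \<and> c \<noteq> b \<and> d \<noteq> a \<and> d \<noteq> b} = Dset n E a b"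
    unfolding Dset_def by auto
  finally show ?thesis .
qed

lemma Dset_finite: "finite (Dset n E a b)"
  by (rule finite_subset[of _ "{..<n} \<times> {..<n}"]) (auto simp: Dset_def)

lemma h_nonneg: "dg n E u * (dg n E u - 1) \<ge> 0"
proof -
  have "dg n E u \<ge> 0" by (simp add: dg_card)
  thus ?thesis by (cases "dg n E u = 0") (simp_all add: mult_nonneg_nonneg)
qed

lemma card_le1: "finite S \<Longrightarrow> S \<subseteq> {a,b} \<Longrightarrow> \<not> (a \<in> S \<and> b \<in> S) \<Longrightarrow> card S \<le> 1"
proof -
  assume f: "finite S" and s: "S \<subseteq> {a,b}" and nb: "\<not> (a \<in> S \<and> b \<in> S)"
  hence "S \<subseteq> {a} \<or> S \<subseteq> {b}" by blast
  thus ?thesis by (metis card.empty card_insert_disjoint card_mono empty_iff finite.emptyI finite.insertI One_nat_def)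
qed

lemma h_zero: "dg n E u \<le> 1 \<Longrightarrow> dg n E u * (dg n E u - 1) = 0"
proof -
  assume "dg n E u \<le> 1"
  moreover have "dg n E u \<ge> 0" by (simp add: dg_card)
  ultimately have "dg n E u = 0 \<or> dg n E u = 1" by linarith
  thus ?thesis by auto
qed

lemma h_two: "dg n E u \<le> 2 \<Longrightarrow> dg n E u * (dg n E u - 1) \<le> 2"
proof -
  assume "dg n E u \<le> 2"
  moreover have "dg n E u \<ge> 0" by (simp add: dg_card)
  ultimately have "dg n E u = 0 \<or> dg n E u = 1 \<or> dg n E u = 2" by linarith
  thus ?thesis by auto
qed

lemma deg_n2:
  assumes g: "is_graph n E" and nc: "\<nexists>cs. is_cycle E cs" and n4: "n \<ge> 4"
    and D: "DD n E = 2 * (int n - 1)" and Q: "QQ n E = (int n - 2) * (int n - 3) + 2"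
  shows "\<exists>a<n. dg n E a = int n - 2"
proof -
  have irr: "\<And>a b. E a b \<Longrightarrow> a \<noteq> b" and sym: "\<And>a b. E a b \<Longrightarrow> E b a"
    and bnd: "\<And>a b. E a b \<Longrightarrow> a < n \<and> b < n" using g unfolding is_graph_def by blast+
  note tri = no_tri[OF g nc]
  have W: "WW n E = 8 * int n - 24" using WW_formula[OF g] D Q by (simp add: algebra_simps)
  have "\<exists>a b. E a b \<and> wdg n E a b \<le> 3"
  proof (rule ccontr)
    assume "\<not> ?thesis"
    hence ge: "\<And>a b. E a b \<Longrightarrow> wdg n E a b \<ge> 4" by force
    have "WW n E \<ge> (\<Sum>a<n. \<Sum>b<n. ind (E a b) * 4)"
      unfolding WW_def
    proof (intro sum_mono)
      fix a b show "ind (E a b) * 4 \<le> ind (E a b) * wdg n E a b" by (cases "E a b") (simp_all add: ge)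
    qed
    also have "(\<Sum>a<n. \<Sum>b<n. ind (E a b) * 4) = 4 * DD n E"
      unfolding DD_def dg_def by (simp add: sum_distrib_right sum_distrib_left mult.commute)
    finally show False using W D by simp
  qed
  then obtain a b where ab: "E a b" and w3: "wdg n E a b \<le> 3" by blast
  have an: "a < n" and bn: "b < n" and anb: "a \<noteq> b" using bnd[OF ab] irr[OF ab] by auto
  define p where "p = dg n E a"
  define q where "q = dg n E b"
  have wf: "wdg n E a b = 2 * int n - 2 * p - 2 * q" using wdg_formula[OF g ab] D unfolding p_def q_def by simp
  have pq_le: "p + q \<le> int n" using wdg_nonneg[of n E a b] wf by simp
  have pq_ge: "p + q \<ge> int n - 1" using w3 wf by simp
  have p1: "p \<ge> 1"
  proof -
    have "b \<in> nbr n E a" using ab bn unfolding nbr_def by simp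
    hence "card (nbr n E a) > 0" by (auto simp: card_gt_0_iff)
    thus ?thesis unfolding p_def dg_card by simp
  qed
  have q1: "q \<ge> 1"
  proof -
    have "a \<in> nbr n E b" using sym[OF ab] an unfolding nbr_def by simp
    hence "card (nbr n E b) > 0" by (auto simp: card_gt_0_iff)
    thus ?thesis unfolding q_def dg_card by simp
  qed
  define h where "h u = dg n E u * (dg n E u - 1)" for u
  define rest where "rest = {..<n} - {a,b}"
  have QS: "QQ n E = h a + h b + (\<Sum>u\<in>rest. h u)"
  proof -
    have sp: "{..<n} = insert a (insert b rest)" using an bn unfolding rest_def by auto
    have nin: "a \<notin> insert b rest" "b \<notin> rest" using anb unfolding rest_def by auto
    have fr: "finite rest" unfolding rest_def by simp
    have "QQ n E = sum h {..<n}" unfolding QQ_def h_def ..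
    also have "\<dots> = h a + (h b + sum h rest)" unfolding sp using nin fr by simp
    finally show ?thesis by simp
  qed
  have hr: "(\<Sum>u\<in>rest. h u) \<ge> 0" by (rule sum_nonneg) (simp add: h_def h_nonneg)
  have ha: "h a = p * (p - 1)" and hb: "h b = q * (q - 1)" unfolding h_def p_def q_def by auto
  have nbr_sub: "\<And>u. u \<in> rest \<Longrightarrow> \<not> (a \<in> nbr n E u \<and> b \<in> nbr n E u)"
    using tri ab sym unfolding nbr_def rest_def by blast
  have nbrD: "\<And>u t. u \<in> rest \<Longrightarrow> t \<in> nbr n E u \<Longrightarrow> t \<notin> {a,b} \<Longrightarrow> (u,t) \<in> Dset n E a b"
    unfolding nbr_def rest_def Dset_def by auto
  show ?thesis
  proof (cases "p + q = int n")
    case True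
    have "wdg n E a b = 0" using wf True by simp
    hence D0: "Dset n E a b = {}" using Dset_finite by (simp add: wdg_card)
    have "\<And>u. u \<in> rest \<Longrightarrow> h u = 0"
    proof -
      fix u assume u: "u \<in> rest"
      have "nbr n E u \<subseteq> {a,b}" using nbrD[OF u] D0 by blast
      hence "card (nbr n E u) \<le> 1" by (rule card_le1[OF nbr_finite _ nbr_sub[OF u]])
      thus "h u = 0" unfolding h_def by (intro h_zero) (simp add: dg_card)
    qed
    hence "(\<Sum>u\<in>rest. h u) = 0" by simp
    hence "(int n - 2) * (int n - 3) + 2 = p * (p - 1) + q * (q - 1)" using QS Q ha hb by simp
    moreover have "q = int n - p" using True by simp
    ultimately have "(p - 2) * (p - (int n - 2)) = 0" by (simp add: algebra_simps)
    hence "p = 2 \<or> p = int n - 2" by simp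
    hence "p = int n - 2 \<or> q = int n - 2" using True by auto
    thus ?thesis unfolding p_def q_def using an bn by blast
  next
    case False
    hence pq: "p + q = int n - 1" using pq_le pq_ge by simp
    have "wdg n E a b = 2" using wf pq by simp
    hence cD: "card (Dset n E a b) = 2" by (simp add: wdg_card)
    then obtain x y where xy: "(x,y) \<in> Dset n E a b"
      by (metis card.empty ex_in_conv surj_pair zero_neq_numeral)
    have yx: "(y,x) \<in> Dset n E a b" using xy sym unfolding Dset_def by auto
    have xny: "x \<noteq> y" using xy irr unfolding Dset_def by auto
    have Dxy: "Dset n E a b = {(x,y),(y,x)}"
    proof -
      have "{(x,y),(y,x)} \<subseteq> Dset n E a b" using xy yx by auto
      moreover have "card {(x,y),(y,x)} = 2" using xny by simp
      ultimately show ?thesis using cD Dset_finite card_subset_eq by metis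
    qed
    have xr: "x \<in> rest" and yr: "y \<in> rest" and exy: "E x y" using xy unfolding Dset_def rest_def by auto
    have h0: "\<And>u. u \<in> rest \<Longrightarrow> u \<noteq> x \<Longrightarrow> u \<noteq> y \<Longrightarrow> h u = 0"
    proof -
      fix u assume u: "u \<in> rest" "u \<noteq> x" "u \<noteq> y"
      have "nbr n E u \<subseteq> {a,b}" using nbrD[OF u(1)] Dxy u by blast
      hence "card (nbr n E u) \<le> 1" by (rule card_le1[OF nbr_finite _ nbr_sub[OF u(1)]])
      thus "h u = 0" unfolding h_def by (intro h_zero) (simp add: dg_card)
    qed
    have hxy: "\<And>u v. (u,v) \<in> {(x,y),(y,x)} \<Longrightarrow> h u \<le> 2 \<and> (h u > 0 \<longrightarrow> E u a \<or> E u b)"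
    proof -
      fix u v assume uv: "(u,v) \<in> {(x,y),(y,x)}"
      have ur: "u \<in> rest" using uv xr yr by auto
      have sub: "nbr n E u \<subseteq> insert v {a,b}" using nbrD[OF ur] Dxy uv xny by auto
      have "card (nbr n E u) \<le> 2"
      proof -
        have "nbr n E u \<subseteq> {v,a} \<or> nbr n E u \<subseteq> {v,b}" using sub nbr_sub[OF ur] by blast
        moreover have "card {v,a} \<le> 2" "card {v,b} \<le> 2" by (simp_all add: card_insert_if)
        ultimately show ?thesis using card_mono[of "{v,a}" "nbr n E u"] card_mono[of "{v,b}" "nbr n E u"] by force
      qed
      hence "h u \<le> 2" unfolding h_def by (intro h_two) (simp add: dg_card)
      moreover have "h u > 0 \<longrightarrow> E u a \<or> E u b"
      proof
        assume "h u > 0"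
        hence "\<not> card (nbr n E u) \<le> 1" using h_zero[of n E u] unfolding h_def by (auto simp: dg_card)
        hence "\<not> nbr n E u \<subseteq> {v}" using card_mono[of "{v}" "nbr n E u"] by force
        thus "E u a \<or> E u b" using sub unfolding nbr_def by blast
      qed
      ultimately show "h u \<le> 2 \<and> (h u > 0 \<longrightarrow> E u a \<or> E u b)" by blast
    qed
    have notboth: "\<not> (h x > 0 \<and> h y > 0)"
    proof
      assume "h x > 0 \<and> h y > 0"
      hence ax: "E x a \<or> E x b" and ay: "E y a \<or> E y b" using hxy[of x y] hxy[of y x] by auto
      have xab: "x \<noteq> a" "x \<noteq> b" "y \<noteq> a" "y \<noteq> b" using xr yr unfolding rest_def by auto
      show False
      proof (cases "E x a")
        case xa: True
        show False
        proof (cases "E y a")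
          case True thus False using tri[of x y a] exy xa sym by blast
        next
          case False
          hence "E y b" using ay by simp
          thus False using no_c4[OF g nc, of x a b y] xa ab exy sym xab by blast
        qed
      next
        case False
        hence xb: "E x b" using ax by simp
        show False
        proof (cases "E y b")
          case True thus False using tri[of x y b] exy xb sym by blast
        next
          case False
          hence "E y a" using ay by simp
          thus False using no_c4[OF g nc, of x b a y] xb ab exy sym xab by blast
        qed
      qed
    qed
    have "(\<Sum>u\<in>rest. h u) = (\<Sum>u\<in>{x,y}. h u)"
      by (rule sum.mono_neutral_right) (use xr yr h0 in \<open>auto simp: rest_def\<close>)
    also have "\<dots> = h x + h y" using xny by simp
    finally have "(\<Sum>u\<in>rest. h u) \<le> 2"
      using hxy[of x y] hxy[of y x] notboth h_nonneg[of n E x] h_nonneg[of n E y] unfolding h_def by auto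
    hence ub: "(int n - 2) * (int n - 3) + 2 \<le> p * (p - 1) + q * (q - 1) + 2" and
      lb: "(int n - 2) * (int n - 3) + 2 \<ge> p * (p - 1) + q * (q - 1)" using QS Q ha hb hr by simp_all
    have ne: "int n = p + q + 1" using pq by simp
    have ub2: "(p + q - 1) * (p + q - 2) \<le> p * (p - 1) + q * (q - 1)" using ub unfolding ne by simp
    have id: "2 * ((p - 1) * (q - 1)) = (p + q - 1) * (p + q - 2) - (p * (p - 1) + q * (q - 1))"
      by (simp add: algebra_simps)
    have "(p - 1) * (q - 1) \<le> 0" using ub2 id by linarith
    moreover have "(p - 1) * (q - 1) \<ge> 0" using p1 q1 by simp
    ultimately have "(p - 1) * (q - 1) = 0" by simp
    hence "p = 1 \<or> q = 1" by simp
    hence "q = int n - 2 \<or> p = int n - 2" using pq by auto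
    thus ?thesis unfolding p_def q_def using an bn by blast
  qed
qed



lemma star_route:
  assumes F: "is_forest n G" and s: "star_sh n G c L" and g': "is_graph n G'"
    and p1: "phi_T n G' = phi_T n G" and p2: "phi_T n (compl_graph n G') = phi_T n (compl_graph n G)"
  shows "graph_iso n G' G"
proof -
  from inv_main[OF F g' p1 p2] have nc': "\<nexists>cs. is_cycle G' cs" and D: "DD n G' = DD n G" and Q: "QQ n G' = QQ n G"
    by auto
  have c: "c < n" using s unfolding star_sh_def by simp
  have W: "WW n G' = 0" using WW_formula[OF g'] D Q star_sh_inv[OF s] by (simp add: algebra_simps)
  have bnd: "\<And>a b. G' a b \<Longrightarrow> a < n \<and> b < n" using g' unfolding is_graph_def by blast
  have "\<exists>c' L'. star_sh n G' c' L'"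
  proof (rule pairwise_star[OF g' nc'])
    show "n \<ge> 1" using c by simp
    fix a b c d assume "G' a b" "G' c d"
    thus "c = a \<or> c = b \<or> d = a \<or> d = b" using WW_zero[OF W] bnd by blast
  qed
  then obtain c' L' where s': "star_sh n G' c' L'" by blast
  have "card L = card L'" using star_sh_inv(1)[OF s] star_sh_inv(1)[OF s'] D by simp
  thus ?thesis by (rule star_iso[OF s s'])
qed

lemma gam_route:
  assumes F: "is_forest n G" and s: "gam_sh n G v x w" and n4: "n \<ge> 4" and g': "is_graph n G'"
    and p1: "phi_T n G' = phi_T n G" and p2: "phi_T n (compl_graph n G') = phi_T n (compl_graph n G)"
  shows "graph_iso n G' G"
proof -
  from inv_main[OF F g' p1 p2] have nc': "\<nexists>cs. is_cycle G' cs" and D: "DD n G' = DD n G" and Q: "QQ n G' = QQ n G"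
    by auto
  have D': "DD n G' = 2 * (int n - 1)" and Q': "QQ n G' = (int n - 2) * (int n - 3) + 2"
    using gam_sh_inv[OF s] D Q by auto
  obtain a where a: "a < n" and da: "dg n G' a = int n - 2" using deg_n2[OF g' nc' n4 D' Q'] by blast
  have irr: "\<And>a b. G' a b \<Longrightarrow> a \<noteq> b" using g' unfolding is_graph_def by blast
  have cn: "card (nbr n G' a) = n - 2" using da n4 by (simp add: dg_card)
  have sub: "nbr n G' a \<subseteq> {..<n} - {a}" unfolding nbr_def using irr by auto
  have cS: "card (({..<n} - {a}) - nbr n G' a) = 1"
    using sub cn a n4 by (subst card_Diff_subset) auto
  then obtain w' where W': "({..<n} - {a}) - nbr n G' a = {w'}" by (meson card_1_singletonE)
  have w': "w' < n" "w' \<noteq> a" "\<not> G' a w'" using W' unfolding nbr_def by auto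
  have dom: "\<And>u. u < n \<Longrightarrow> u \<noteq> a \<Longrightarrow> u \<noteq> w' \<Longrightarrow> G' a u" using W' unfolding nbr_def by auto
  from shape[OF g' nc' a w'(1) dom]
  consider "star_sh n G' a ({..<n} - {a})" | "\<not> G' a w' \<and> star_sh n G' a ({..<n} - {a,w'})"
    | "\<exists>x'. gam_sh n G' a x' w'" by blast
  then show ?thesis
  proof cases
    case 1
    hence "G' a w'" using w' unfolding star_sh_def by auto
    with w' show ?thesis by simp
  next
    case 2
    hence "DD n G' = 2 * int (card ({..<n} - {a,w'}))" using star_sh_inv(1) by blast
    moreover have "card ({..<n} - {a,w'}) = n - 2" using a w' by (subst card_Diff_subset) auto
    ultimately show ?thesis using D' n4 by (simp add: of_nat_diff)
  next
    case 3
    then obtain x' where "gam_sh n G' a x' w'" by blast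
    thus ?thesis by (rule gam_iso[OF s])
  qed
qed

lemma gam3_star:
  assumes s: "gam_sh n G v x w" and n3: "n = 3"
  shows "star_sh n G x {v,w}"
proof -
  have v: "v < n" and x: "x < n" and w: "w < n" and ne: "v \<noteq> x" "v \<noteq> w" "x \<noteq> w"
    and e: "\<And>a b. G a b \<longleftrightarrow> (a = v \<and> b \<in> {..<n} - {v,w}) \<or> (b = v \<and> a \<in> {..<n} - {v,w}) \<or> (a = x \<and> b = w) \<or> (a = w \<and> b = x)"
    using s unfolding gam_sh_def by auto
  have "{v,x,w} = {..<n}"
  proof (rule card_subset_eq)
    show "finite {..<n}" by simp
    show "{v,x,w} \<subseteq> {..<n}" using v x w by auto
    show "card {v,x,w} = card {..<n}" using ne n3 by simp
  qed
  hence R: "{..<n} - {v,w} = {x}" using ne by auto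
  show ?thesis unfolding star_sh_def using x v w ne e[unfolded R] by auto
qed

theorem lemma2p6:
  fixes n :: nat and G :: "nat \<Rightarrow> nat \<Rightarrow> bool"
  assumes "is_forest n G"
  shows "(graph_connected n (compl_graph n G) \<and> min_degree_ge n (compl_graph n G) 2)
    \<or> (\<forall>G'. is_graph n G' \<and> phi_T n G' = phi_T n G
              \<and> phi_T n (compl_graph n G') = phi_T n (compl_graph n G)
            \<longrightarrow> graph_iso n G' G)"
proof (cases "graph_connected n (compl_graph n G) \<and> min_degree_ge n (compl_graph n G) 2")
  case True thus ?thesis by blast
next
  case False
  have F: "is_forest n G" by fact
  have g: "is_graph n G" and nc: "\<nexists>cs. is_cycle G cs" using F unfolding is_forest_def by auto
  from fail_i[OF F False] obtain v w where v: "v < n" and w: "w < n"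
    and dom: "\<And>u. u < n \<Longrightarrow> u \<noteq> v \<Longrightarrow> u \<noteq> w \<Longrightarrow> G v u" by blast
  have "\<forall>G'. is_graph n G' \<and> phi_T n G' = phi_T n G
              \<and> phi_T n (compl_graph n G') = phi_T n (compl_graph n G) \<longrightarrow> graph_iso n G' G"
  proof (intro allI impI)
    fix G' assume H: "is_graph n G' \<and> phi_T n G' = phi_T n G \<and> phi_T n (compl_graph n G') = phi_T n (compl_graph n G)"
    hence g': "is_graph n G'" and p1: "phi_T n G' = phi_T n G"
      and p2: "phi_T n (compl_graph n G') = phi_T n (compl_graph n G)" by auto
    from shape[OF g nc v w dom]
    consider "star_sh n G v ({..<n} - {v})" | "\<not> G v w \<and> star_sh n G v ({..<n} - {v,w})"
      | "\<exists>x. gam_sh n G v x w" by blast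
    thus "graph_iso n G' G"
    proof cases
      case 1 thus ?thesis using star_route[OF F _ g' p1 p2] by blast
    next
      case 2 thus ?thesis using star_route[OF F _ g' p1 p2] by blast
    next
      case 3
      then obtain x where s: "gam_sh n G v x w" by blast
      have "n \<ge> 3"
      proof -
        have "{v,x,w} \<subseteq> {..<n}" using s unfolding gam_sh_def by auto
        hence "card {v,x,w} \<le> n" using card_mono[of "{..<n}" "{v,x,w}"] by simp
        thus ?thesis using s unfolding gam_sh_def by simp
      qed
      show ?thesis
      proof (cases "n = 3")
        case True thus ?thesis using star_route[OF F gam3_star[OF s True] g' p1 p2] by blast
      next
        case False
        hence "n \<ge> 4" using \<open>n \<ge> 3\<close> by simp
        thus ?thesis using gam_route[OF F s _ g' p1 p2] by blast
      qed
    qed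
  qed
  thus ?thesis by blast
qed

end
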